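(* Let $\mathcal{R}$ be a left-connected rewriting system over a signature $\Sigma$, let $L_i, L_j$ be left-hand sides of rules of $\mathcal{R}$, let $S_{ij\gamma}$ (with $\epsilon_{ij\gamma}\colon L_i+L_j\to S_{ij\gamma}$) be a hyperedge gluing and $S_{ij\gamma'}$ (with $\epsilon_{ij\gamma'}\colon S_{ij\gamma}\to S_{ij\gamma'}$) a subsequent node gluing, as described below. If $S_{ij\gamma'}$ yields a critical pair, then $S_{ij\gamma}$ yields a critical pair as well.
   Context: A signature $\Sigma$ is a set of triples $(x,n,m)$ (label, arity, coarity). A $\Sigma$-hypergraph $G=(V,E,s,t,l)$ has finite sets $V$ (nodes), $E$ (hyperedges), maps $s,t\colon E\to V^*$ (lists of sources/targets) and a labelling $l\colon E\to\Sigma$ sending a hyperedge with $n$ sources and $m$ targets to some $(x,n,m)$. Morphisms preserve sources, targets and labels; they form the category $\mathbf{Hyp}_\Sigma$, where colimits are computed componentwise and monos/epis are injective/surjective on nodes and hyperedges. Composition is written $f;g$; $\iota_1,\iota_2$ are coprojections. A hypergraph is discrete if it has no hyperedges. A path is a list of hyperedges $[e_1,\dots,e_n]$ with some target of $e_k$ equal to a source of $e_{k+1}$ for each $k$; it goes from $v$ to $v'$ if $v$ is a source of $e_1$ and $v'$ a target of $e_n$; a cycle is a path with some source of $e_1$ a target of $e_n$. In-degree (out-degree) of a node $v$: number of pairs $(e,i)$ with $v$ the $i$-th target (source) of $e$; $in(H)$, $out(H)$: nodes of in-degree $0$, out-degree $0$. $H$ is ma (monogamous acyclic) if it has no cycle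 and all in- and out-degrees are $\le 1$. A cospan $I\to H\leftarrow O$ with $I,O$ discrete is an ma-cospan if $H$ is ma and the legs are mono with images $in(H)$ and $out(H)$. $H$ is strongly connected if for all $x\in in(H)$, $y\in out(H)$ there is a path from $x$ to $y$. A left-connected rule is a span $L\xleftarrow{[i_L,o_L]}K=I+O\xrightarrow{[i_R,o_R]}R$ with $I,O$ discrete, $I\to L\leftarrow O$, $I\to R\leftarrow O$ ma-cospans, $[i_L,o_L]$ mono, $L$ strongly connected; a left-connected rewriting system is a finite set of such rules. Derivations (convex DPO rewriting with interface) between ma-cospans are given by a rule, a convex match (a mono whose image contains every hyperedge on every path between two of its nodes) and a double pushout diagram commuting with the interface; for left-connected systems they are determined by a rule and a mono match. A pre-critical pair is a pair of derivations from a common ma-cospan $n\to S\leftarrow m$ with matches $m_1\colon L_i\to S$, $m_2\colon L_j\to S$ such that $[m_1,m_2]$ is epi; it is parallel if $m_1$ factors through the pushout complement $C_2\to S$ of the second derivation and $m_2$ factors through the pushout complement $C_1\to S$ of the first; it is critical if not parallel. Hyperedge gluing: let $M$ be a nonempty set of pairs $(e,e')$, $e$ a hyperedge of $L_i$, $e'$ a hyperedge of $L_j$, with equal labels, no hyperedge occurring in two pairs; let $\gamma$ be the hypergraph with hyperedges $M$ and nodes the pairs $(v,v')$ that are $k$-th sources (or $k$-th targets) of $e,e'$ for some $(e,e')\in M$ and $k$, with projections $p_1^\gamma\colon\gamma\to L_i$, $p_2^\gamma\colon\gamma\to L_j$; $\epsilon_{ij\gamma}\colon L_i+L_j\to S_{ij\gamma}$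 is the coequaliser of $p_1^\gamma;\iota_1$ and $p_2^\gamma;\iota_2$. Node gluing: let $I_1=in(S_{ij\gamma})\cap\epsilon_{ij\gamma}(\iota_1(in(L_i)))$, $I_2=in(S_{ij\gamma})\cap\epsilon_{ij\gamma}(\iota_2(in(L_j)))$, $O_1=out(S_{ij\gamma})\cap\epsilon_{ij\gamma}(\iota_1(out(L_i)))$, $O_2=out(S_{ij\gamma})\cap\epsilon_{ij\gamma}(\iota_2(out(L_j)))$; let $N$ be a set of pairs in $I_1\times O_2$, or a set of pairs in $I_2\times O_1$, with no element occurring in two pairs; $\gamma'$ is the discrete hypergraph with nodes $N$ and projections $p_1^{\gamma'},p_2^{\gamma'}\colon\gamma'\to S_{ij\gamma}$, and $\epsilon_{ij\gamma'}\colon S_{ij\gamma}\to S_{ij\gamma'}$ is their coequaliser. $S_{ij\gamma}$ yields a critical pair if $\iota_1;\epsilon_{ij\gamma}$, $\iota_2;\epsilon_{ij\gamma}$ are mono, $in(S_{ij\gamma})\xrightarrow{\subseteq}S_{ij\gamma}\xleftarrow{\subseteq}out(S_{ij\gamma})$ is an ma-cospan, and the derivations from it with these matches form a critical pair; likewise for $S_{ij\gamma'}$ with the matches $\iota_k;\epsilon_{ij\gamma};\epsilon_{ij\gamma'}$. *)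

theory Defs
  imports Main
begin

text \<open>A label is a triple (x, n, m) of the signature; a signature is a set of such triples.\<close>

record ('v, 'e, 'l) hg =
  hV   :: "'v set"
  hE   :: "'e set"
  hsrc :: "'e \<Rightarrow> 'v list"
  htgt :: "'e \<Rightarrow> 'v list"
  hlab :: "'e \<Rightarrow> 'l \<times> nat \<times> nat"

definition hyp :: "('l \<times> nat \<times> nat) set \<Rightarrow> ('v, 'e, 'l) hg \<Rightarrow> bool" where
  "hyp sig G \<longleftrightarrow> finite (hV G) \<and> finite (hE G) \<and>
     (\<forall>e\<in>hE G. set (hsrc G e) \<subseteq> hV G \<and> set (htgt G e) \<subseteq> hV G \<and> hlab G e \<in> sig \<and>
        hlab G e = (fst (hlab G e), length (hsrc G e), length (htgt G e)))"

text \<open>Morphisms: pairs of maps (on nodes, on hyperedges), only relevant on the carriers.\<close>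
definition hom :: "('v, 'e, 'l) hg \<Rightarrow> ('w, 'f, 'l) hg \<Rightarrow> ('v \<Rightarrow> 'w) \<Rightarrow> ('e \<Rightarrow> 'f) \<Rightarrow> bool" where
  "hom G H fv fe \<longleftrightarrow> (\<forall>v\<in>hV G. fv v \<in> hV H) \<and>
     (\<forall>e\<in>hE G. fe e \<in> hE H \<and> hsrc H (fe e) = map fv (hsrc G e) \<and>
        htgt H (fe e) = map fv (htgt G e) \<and> hlab H (fe e) = hlab G e)"

definition mono_hom :: "('v, 'e, 'l) hg \<Rightarrow> ('w, 'f, 'l) hg \<Rightarrow> ('v \<Rightarrow> 'w) \<Rightarrow> ('e \<Rightarrow> 'f) \<Rightarrow> bool" where
  "mono_hom G H fv fe \<longleftrightarrow> hom G H fv fe \<and> inj_on fv (hV G) \<and> inj_on fe (hE G)"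

definition hg_sum :: "('v, 'e, 'l) hg \<Rightarrow> ('w, 'f, 'l) hg \<Rightarrow> ('v + 'w, 'e + 'f, 'l) hg" where
  "hg_sum G H = \<lparr> hV = hV G <+> hV H, hE = hE G <+> hE H,
     hsrc = case_sum (\<lambda>e. map Inl (hsrc G e)) (\<lambda>e. map Inr (hsrc H e)),
     htgt = case_sum (\<lambda>e. map Inl (htgt G e)) (\<lambda>e. map Inr (htgt H e)),
     hlab = case_sum (hlab G) (hlab H) \<rparr>"

definition discrete :: "'v set \<Rightarrow> ('v, 'e, 'l) hg" where
  "discrete X = \<lparr> hV = X, hE = {}, hsrc = (\<lambda>_. []), htgt = (\<lambda>_. []), hlab = (\<lambda>_. undefined) \<rparr>"

section \<open>Colimits (computed componentwise, as in Set)\<close>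

definition set_coeq :: "'a set \<Rightarrow> 'b set \<Rightarrow> ('a \<Rightarrow> 'b) \<Rightarrow> ('a \<Rightarrow> 'b) \<Rightarrow> 'c set \<Rightarrow> ('b \<Rightarrow> 'c) \<Rightarrow> bool" where
  "set_coeq A B f g Q q \<longleftrightarrow> q ` B = Q \<and>
     (let R = {(f a, g a) | a. a \<in> A} in
       \<forall>x\<in>B. \<forall>y\<in>B. q x = q y \<longleftrightarrow> (x, y) \<in> (R \<union> converse R)\<^sup>*)"

definition set_pushout :: "'a set \<Rightarrow> 'b set \<Rightarrow> 'c set \<Rightarrow> 'd set \<Rightarrow>
    ('a \<Rightarrow> 'b) \<Rightarrow> ('a \<Rightarrow> 'c) \<Rightarrow> ('b \<Rightarrow> 'd) \<Rightarrow> ('c \<Rightarrow> 'd) \<Rightarrow> bool" where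
  "set_pushout A B C D f g h k \<longleftrightarrow> (\<forall>a\<in>A. h (f a) = k (g a)) \<and> h ` B \<union> k ` C = D \<and>
     (let R = {(Inl (f a), Inr (g a)) | a. a \<in> A} in
       \<forall>x\<in>B <+> C. \<forall>y\<in>B <+> C. case_sum h k x = case_sum h k y \<longleftrightarrow> (x, y) \<in> (R \<union> converse R)\<^sup>*)"

definition coeq_hg :: "('a, 'e, 'l) hg \<Rightarrow> ('b, 'f, 'l) hg \<Rightarrow> ('a \<Rightarrow> 'b) \<Rightarrow> ('e \<Rightarrow> 'f)
    \<Rightarrow> ('a \<Rightarrow> 'b) \<Rightarrow> ('e \<Rightarrow> 'f) \<Rightarrow> ('c, 'g, 'l) hg \<Rightarrow> ('b \<Rightarrow> 'c) \<Rightarrow> ('f \<Rightarrow> 'g) \<Rightarrow> bool" where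
  "coeq_hg A B fv fe gv ge Q qv qe \<longleftrightarrow> hom A B fv fe \<and> hom A B gv ge \<and> hom B Q qv qe \<and>
     set_coeq (hV A) (hV B) fv gv (hV Q) qv \<and> set_coeq (hE A) (hE B) fe ge (hE Q) qe"

definition pushout_hg :: "('a, 'ea, 'l) hg \<Rightarrow> ('b, 'eb, 'l) hg \<Rightarrow> ('c, 'ec, 'l) hg \<Rightarrow> ('d, 'ed, 'l) hg
    \<Rightarrow> ('a \<Rightarrow> 'b) \<Rightarrow> ('ea \<Rightarrow> 'eb) \<Rightarrow> ('a \<Rightarrow> 'c) \<Rightarrow> ('ea \<Rightarrow> 'ec)
    \<Rightarrow> ('b \<Rightarrow> 'd) \<Rightarrow> ('eb \<Rightarrow> 'ed) \<Rightarrow> ('c \<Rightarrow> 'd) \<Rightarrow> ('ec \<Rightarrow> 'ed) \<Rightarrow> bool" where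
  "pushout_hg A B C D fv fe gv ge hv he kv ke \<longleftrightarrow>
     hom A B fv fe \<and> hom A C gv ge \<and> hom B D hv he \<and> hom C D kv ke \<and>
     set_pushout (hV A) (hV B) (hV C) (hV D) fv gv hv kv \<and>
     set_pushout (hE A) (hE B) (hE C) (hE D) fe ge he ke"

definition is_path :: "('v, 'e, 'l) hg \<Rightarrow> 'e list \<Rightarrow> bool" where
  "is_path G es \<longleftrightarrow> es \<noteq> [] \<and> set es \<subseteq> hE G \<and>
     (\<forall>k. Suc k < length es \<longrightarrow> set (htgt G (es ! k)) \<inter> set (hsrc G (es ! Suc k)) \<noteq> {})"

definition path_from_to :: "('v, 'e, 'l) hg \<Rightarrow> 'e list \<Rightarrow> 'v \<Rightarrow> 'v \<Rightarrow> bool" where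
  "path_from_to G es v w \<longleftrightarrow> is_path G es \<and> v \<in> set (hsrc G (hd es)) \<and> w \<in> set (htgt G (last es))"

definition is_cycle :: "('v, 'e, 'l) hg \<Rightarrow> 'e list \<Rightarrow> bool" where
  "is_cycle G es \<longleftrightarrow> is_path G es \<and> set (hsrc G (hd es)) \<inter> set (htgt G (last es)) \<noteq> {}"

definition indeg :: "('v, 'e, 'l) hg \<Rightarrow> 'v \<Rightarrow> nat" where
  "indeg G v = card {(e, i). e \<in> hE G \<and> i < length (htgt G e) \<and> htgt G e ! i = v}"

definition outdeg :: "('v, 'e, 'l) hg \<Rightarrow> 'v \<Rightarrow> nat" where
  "outdeg G v = card {(e, i). e \<in> hE G \<and> i < length (hsrc G e) \<and> hsrc G e ! i = v}"

definition inn :: "('v, 'e, 'l) hg \<Rightarrow> 'v set" where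
  "inn G = {v \<in> hV G. indeg G v = 0}"

definition outn :: "('v, 'e, 'l) hg \<Rightarrow> 'v set" where
  "outn G = {v \<in> hV G. outdeg G v = 0}"

definition ma :: "('v, 'e, 'l) hg \<Rightarrow> bool" where
  "ma G \<longleftrightarrow> (\<forall>es. \<not> is_cycle G es) \<and> (\<forall>v\<in>hV G. indeg G v \<le> 1 \<and> outdeg G v \<le> 1)"

text \<open>I -i-> H <-o- O with I, O discrete is an ma-cospan.\<close>
definition ma_cospan :: "'k set \<Rightarrow> 'k set \<Rightarrow> ('v, 'e, 'l) hg \<Rightarrow> ('k \<Rightarrow> 'v) \<Rightarrow> ('k \<Rightarrow> 'v) \<Rightarrow> bool" where
  "ma_cospan XI XO H fi fo \<longleftrightarrow> ma H \<and> inj_on fi XI \<and> fi ` XI = inn H \<and> inj_on fo XO \<and> fo ` XO = outn H"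

definition strongly_connected :: "('v, 'e, 'l) hg \<Rightarrow> bool" where
  "strongly_connected H \<longleftrightarrow> (\<forall>x\<in>inn H. \<forall>y\<in>outn H. \<exists>es. path_from_to H es x y)"

text \<open>A rule L <-[iL,oL]- I + O -[iR,oR]-> R with I, O discrete (given by node sets).\<close>
record ('k, 'v, 'e, 'l) rule =
  rI :: "'k set"
  rO :: "'k set"
  rL :: "('v, 'e, 'l) hg"
  rR :: "('v, 'e, 'l) hg"
  riL :: "'k \<Rightarrow> 'v"
  roL :: "'k \<Rightarrow> 'v"
  riR :: "'k \<Rightarrow> 'v"
  roR :: "'k \<Rightarrow> 'v"

definition left_connected_rule :: "('l \<times> nat \<times> nat) set \<Rightarrow> ('k, 'v, 'e, 'l) rule \<Rightarrow> bool" where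
  "left_connected_rule sig \<rho> \<longleftrightarrow> finite (rI \<rho>) \<and> finite (rO \<rho>) \<and> hyp sig (rL \<rho>) \<and> hyp sig (rR \<rho>) \<and>
     ma_cospan (rI \<rho>) (rO \<rho>) (rL \<rho>) (riL \<rho>) (roL \<rho>) \<and>
     ma_cospan (rI \<rho>) (rO \<rho>) (rR \<rho>) (riR \<rho>) (roR \<rho>) \<and>
     inj_on (case_sum (riL \<rho>) (roL \<rho>)) (rI \<rho> <+> rO \<rho>) \<and>
     strongly_connected (rL \<rho>)"

definition left_connected_system :: "('l \<times> nat \<times> nat) set \<Rightarrow> ('k, 'v, 'e, 'l) rule set \<Rightarrow> bool" where
  "left_connected_system sig \<R> \<longleftrightarrow> finite \<R> \<and> (\<forall>\<rho>\<in>\<R>. left_connected_rule sig \<rho>)"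

section \<open>Derivations (convex DPO rewriting with interface)\<close>

definition convex_match :: "('v, 'e, 'l) hg \<Rightarrow> ('a, 'b, 'l) hg \<Rightarrow> ('v \<Rightarrow> 'a) \<Rightarrow> ('e \<Rightarrow> 'b) \<Rightarrow> bool" where
  "convex_match L S mv me \<longleftrightarrow> mono_hom L S mv me \<and>
     (\<forall>v w es. v \<in> mv ` hV L \<and> w \<in> mv ` hV L \<and> path_from_to S es v w \<longrightarrow> set es \<subseteq> me ` hE L)"

text \<open>
  deriv sig rho S mv me C gv ge: there is a derivation from the ma-cospan in(S) -> S <- out(S)
  with rule rho, convex match (mv, me) : L -> S and pushout complement (gv, ge) : C -> S,
  i.e. a double pushout diagram
     L <- I+O -> R,   L -> S <- C -> T <- R,   I+O -> C
  with both squares pushouts, together with d = [dn, dm] : in(S) + out(S) -> C commuting with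
  the interface (d ; g = the inclusions), the result in(S) -> T <- out(S) (via d ; h) being an
  ma-cospan.  The pushout complement is represented with the carrier types of S (it embeds
  into S), the result T with carrier types large enough for any pushout.
\<close>
definition deriv :: "('l \<times> nat \<times> nat) set \<Rightarrow> ('k, 'v, 'e, 'l) rule \<Rightarrow> ('a, 'b, 'l) hg
    \<Rightarrow> ('v \<Rightarrow> 'a) \<Rightarrow> ('e \<Rightarrow> 'b) \<Rightarrow> ('a, 'b, 'l) hg \<Rightarrow> ('a \<Rightarrow> 'a) \<Rightarrow> ('b \<Rightarrow> 'b) \<Rightarrow> bool" where
  "deriv sig \<rho> S mv me C gv ge \<longleftrightarrow>
     hyp sig S \<and> ma S \<and> convex_match (rL \<rho>) S mv me \<and> hyp sig C \<and>
     (\<exists>(kv :: 'k + 'k \<Rightarrow> 'a) (dn :: 'a \<Rightarrow> 'a) (dm :: 'a \<Rightarrow> 'a)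
        (T :: (('v + 'a) set, ('e + 'b) set, 'l) hg) hv he rv re.
        pushout_hg (discrete (rI \<rho> <+> rO \<rho>) :: ('k + 'k, 'e, 'l) hg) (rL \<rho>) C S
          (case_sum (riL \<rho>) (roL \<rho>)) (\<lambda>_. undefined) kv (\<lambda>_. undefined) mv me gv ge \<and>
        pushout_hg (discrete (rI \<rho> <+> rO \<rho>) :: ('k + 'k, 'e, 'l) hg) (rR \<rho>) C T
          (case_sum (riR \<rho>) (roR \<rho>)) (\<lambda>_. undefined) kv (\<lambda>_. undefined) rv re hv he \<and>
        hyp sig T \<and>
        (\<forall>x\<in>inn S. dn x \<in> hV C \<and> gv (dn x) = x) \<and>
        (\<forall>x\<in>outn S. dm x \<in> hV C \<and> gv (dm x) = x) \<and>
        ma_cospan (inn S) (outn S) T (hv \<circ> dn) (hv \<circ> dm))"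

definition factors_through :: "('v, 'e, 'l) hg \<Rightarrow> ('a, 'b, 'l) hg \<Rightarrow> ('v \<Rightarrow> 'a) \<Rightarrow> ('e \<Rightarrow> 'b)
    \<Rightarrow> ('a \<Rightarrow> 'a) \<Rightarrow> ('b \<Rightarrow> 'b) \<Rightarrow> bool" where
  "factors_through L C mv me gv ge \<longleftrightarrow>
     (\<exists>hv he. hom L C hv he \<and> (\<forall>v\<in>hV L. gv (hv v) = mv v) \<and> (\<forall>e\<in>hE L. ge (he e) = me e))"

text \<open>
  S yields a critical pair for rules rho1, rho2 with matches m1, m2: the matches are mono,
  in(S) -> S <- out(S) is an ma-cospan, and the derivations from it with these matches form a
  pre-critical pair ([m1, m2] epi) which is not parallel.
\<close>
definition yields_cp :: "('l \<times> nat \<times> nat) set \<Rightarrow> ('k, 'v, 'e, 'l) rule \<Rightarrow> ('k, 'v, 'e, 'l) rule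
    \<Rightarrow> ('a, 'b, 'l) hg \<Rightarrow> ('v \<Rightarrow> 'a) \<Rightarrow> ('e \<Rightarrow> 'b) \<Rightarrow> ('v \<Rightarrow> 'a) \<Rightarrow> ('e \<Rightarrow> 'b) \<Rightarrow> bool" where
  "yields_cp sig \<rho>1 \<rho>2 S m1v m1e m2v m2e \<longleftrightarrow>
     mono_hom (rL \<rho>1) S m1v m1e \<and> mono_hom (rL \<rho>2) S m2v m2e \<and> hyp sig S \<and> ma S \<and>
     (\<exists>C1 g1v g1e C2 g2v g2e.
        deriv sig \<rho>1 S m1v m1e C1 g1v g1e \<and> deriv sig \<rho>2 S m2v m2e C2 g2v g2e \<and>
        hV S = m1v ` hV (rL \<rho>1) \<union> m2v ` hV (rL \<rho>2) \<and>
        hE S = m1e ` hE (rL \<rho>1) \<union> m2e ` hE (rL \<rho>2) \<and>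
        \<not> (factors_through (rL \<rho>1) C2 m1v m1e g2v g2e \<and>
            factors_through (rL \<rho>2) C1 m2v m2e g1v g1e))"

definition edge_gluing_pairs :: "('v, 'e, 'l) hg \<Rightarrow> ('v, 'e, 'l) hg \<Rightarrow> ('e \<times> 'e) set \<Rightarrow> bool" where
  "edge_gluing_pairs Li Lj M \<longleftrightarrow> M \<noteq> {} \<and> M \<subseteq> hE Li \<times> hE Lj \<and>
     (\<forall>(e, e')\<in>M. hlab Li e = hlab Lj e') \<and> inj_on fst M \<and> inj_on snd M"

text \<open>The hypergraph gamma; its projections to Li, Lj are (fst, fst) and (snd, snd).\<close>
definition gamma :: "('v, 'e, 'l) hg \<Rightarrow> ('v, 'e, 'l) hg \<Rightarrow> ('e \<times> 'e) set \<Rightarrow> ('v \<times> 'v, 'e \<times> 'e, 'l) hg" where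
  "gamma Li Lj M = \<lparr>
     hV = {(v, v'). \<exists>(e, e')\<in>M. \<exists>k.
            (k < length (hsrc Li e) \<and> k < length (hsrc Lj e') \<and> v = hsrc Li e ! k \<and> v' = hsrc Lj e' ! k) \<or>
            (k < length (htgt Li e) \<and> k < length (htgt Lj e') \<and> v = htgt Li e ! k \<and> v' = htgt Lj e' ! k)},
     hE = M,
     hsrc = (\<lambda>(e, e'). zip (hsrc Li e) (hsrc Lj e')),
     htgt = (\<lambda>(e, e'). zip (htgt Li e) (htgt Lj e')),
     hlab = (\<lambda>(e, e'). hlab Li e) \<rparr>"

definition node_gluing_pairs :: "('v, 'e, 'l) hg \<Rightarrow> ('v, 'e, 'l) hg \<Rightarrow> ('a, 'b, 'l) hg
    \<Rightarrow> ('v + 'v \<Rightarrow> 'a) \<Rightarrow> ('a \<times> 'a) set \<Rightarrow> bool" where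
  "node_gluing_pairs Li Lj S epsv N \<longleftrightarrow>
     (let I1 = inn S \<inter> epsv ` Inl ` inn Li; I2 = inn S \<inter> epsv ` Inr ` inn Lj;
          O1 = outn S \<inter> epsv ` Inl ` outn Li; O2 = outn S \<inter> epsv ` Inr ` outn Lj in
      (N \<subseteq> I1 \<times> O2 \<or> N \<subseteq> I2 \<times> O1) \<and>
      (\<forall>p\<in>N. \<forall>q\<in>N. p \<noteq> q \<longrightarrow> {fst p, snd p} \<inter> {fst q, snd q} = {}))"

end

theory Submission
  imports Defs
begin


section \<open>Equivalence closure\<close>

lemma eqc_sym: "(x, y) \<in> (R \<union> R\<inverse>)\<^sup>* \<Longrightarrow> (y, x) \<in> (R \<union> R\<inverse>)\<^sup>*"
  by (metis converse_Un converse_converse rtrancl_converseI sup_commute)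

lemma eqc_trans: "(x, y) \<in> (R \<union> R\<inverse>)\<^sup>* \<Longrightarrow> (y, z) \<in> (R \<union> R\<inverse>)\<^sup>* \<Longrightarrow> (x, z) \<in> (R \<union> R\<inverse>)\<^sup>*"
  by (rule rtrancl_trans)

lemma eqc_fun:
  assumes "(x, y) \<in> (R \<union> R\<inverse>)\<^sup>*" "\<And>a b. (a, b) \<in> R \<Longrightarrow> F a = F b"
  shows "F x = F y"
  using assms(1)
proof (induction rule: rtrancl_induct)
  case base then show ?case by simp
next
  case (step y z) then show ?case using assms(2) by auto
qed

section \<open>Pushout reachability\<close>

lemma po_Inl_gen:
  assumes "(Inl b, y) \<in> ({(Inl (f a), Inr (g a)) | a. a \<in> A} \<union> {(Inl (f a), Inr (g a)) | a. a \<in> A}\<inverse>)\<^sup>*"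
    "y \<noteq> Inl b"
  shows "\<exists>a\<in>A. f a = b \<and> (Inr (g a), y) \<in> ({(Inl (f a), Inr (g a)) | a. a \<in> A} \<union> {(Inl (f a), Inr (g a)) | a. a \<in> A}\<inverse>)\<^sup>*"
  using assms by (cases rule: converse_rtranclE) auto

lemma po_Inr_gen:
  assumes "(Inr c, y) \<in> ({(Inl (f a), Inr (g a)) | a. a \<in> A} \<union> {(Inl (f a), Inr (g a)) | a. a \<in> A}\<inverse>)\<^sup>*"
    "y \<noteq> Inr c"
  shows "\<exists>a\<in>A. g a = c \<and> (Inl (f a), y) \<in> ({(Inl (f a), Inr (g a)) | a. a \<in> A} \<union> {(Inl (f a), Inr (g a)) | a. a \<in> A}\<inverse>)\<^sup>*"
  using assms by (cases rule: converse_rtranclE) auto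

lemma po_Inr_reach:
  assumes "inj_on f A"
    "(Inr c, y) \<in> ({(Inl (f a), Inr (g a)) | a. a \<in> A} \<union> {(Inl (f a), Inr (g a)) | a. a \<in> A}\<inverse>)\<^sup>*"
  shows "y = Inr c \<or> (\<exists>a\<in>A. g a = c \<and> y = Inl (f a))"
  using assms(2)
proof (induction rule: rtrancl_induct)
  case base then show ?case by simp
next
  case (step y z)
  from step.IH show ?case
  proof
    assume "y = Inr c" then show ?thesis using step.hyps(2) by auto
  next
    assume "\<exists>a\<in>A. g a = c \<and> y = Inl (f a)"
    then obtain a where a: "a \<in> A" "g a = c" "y = Inl (f a)" by blast
    then show ?thesis using step.hyps(2) assms(1) by (auto dest: inj_onD)
  qed
qed

lemma po_Inl_reach:
  assumes "inj_on g A"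
    "(Inl b, y) \<in> ({(Inl (f a), Inr (g a)) | a. a \<in> A} \<union> {(Inl (f a), Inr (g a)) | a. a \<in> A}\<inverse>)\<^sup>*"
  shows "y = Inl b \<or> (\<exists>a\<in>A. f a = b \<and> y = Inr (g a))"
  using assms(2)
proof (induction rule: rtrancl_induct)
  case base then show ?case by simp
next
  case (step y z)
  from step.IH show ?case
  proof
    assume "y = Inl b" then show ?thesis using step.hyps(2) by auto
  next
    assume "\<exists>a\<in>A. f a = b \<and> y = Inr (g a)"
    then obtain a where a: "a \<in> A" "f a = b" "y = Inr (g a)" by blast
    then show ?thesis using step.hyps(2) assms(1) by (auto dest: inj_onD)
  qed
qed

lemma set_pushout_rel:
  assumes "set_pushout A B C D f g h k" "x \<in> B <+> C" "y \<in> B <+> C"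
  shows "case_sum h k x = case_sum h k y \<longleftrightarrow>
    (x, y) \<in> ({(Inl (f a), Inr (g a)) | a. a \<in> A} \<union> {(Inl (f a), Inr (g a)) | a. a \<in> A}\<inverse>)\<^sup>*"
  using assms unfolding set_pushout_def Let_def by blast

lemma set_pushout_comm:
  "set_pushout A B C D f g h k \<Longrightarrow> \<forall>a\<in>A. h (f a) = k (g a)"
  unfolding set_pushout_def by auto

lemma set_pushout_img:
  "set_pushout A B C D f g h k \<Longrightarrow> h ` B \<union> k ` C = D"
  unfolding set_pushout_def by auto

lemma set_pushout_hk:
  assumes "set_pushout A B C D f g h k" "b \<in> B" "c \<in> C" "h b = k c"
  shows "\<exists>a\<in>A. f a = b"
proof -
  let ?R = "{(Inl (f a), Inr (g a)) | a. a \<in> A}"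
  have "(Inl b, Inr c) \<in> (?R \<union> ?R\<inverse>)\<^sup>*" using set_pushout_rel[OF assms(1), of "Inl b" "Inr c"] assms by auto
  from po_Inl_gen[OF this] show ?thesis by auto
qed

lemma set_pushout_hk_inj:
  assumes "set_pushout A B C D f g h k" "b \<in> B" "c \<in> C" "h b = k c" "inj_on f A"
  shows "\<exists>a\<in>A. f a = b \<and> g a = c"
proof -
  let ?R = "{(Inl (f a), Inr (g a)) | a. a \<in> A}"
  have "(Inr c, Inl b) \<in> (?R \<union> ?R\<inverse>)\<^sup>*" using set_pushout_rel[OF assms(1), of "Inr c" "Inl b"] assms by auto
  from po_Inr_reach[OF assms(5) this] show ?thesis by auto
qed

lemma set_pushout_k_inj:
  assumes "set_pushout A B C D f g h k" "inj_on f A"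
  shows "inj_on k C"
proof (rule inj_onI)
  fix c c' assume c: "c \<in> C" "c' \<in> C" "k c = k c'"
  let ?R = "{(Inl (f a), Inr (g a)) | a. a \<in> A}"
  have "(Inr c, Inr c') \<in> (?R \<union> ?R\<inverse>)\<^sup>*" using set_pushout_rel[OF assms(1), of "Inr c" "Inr c'"] c by auto
  from po_Inr_reach[OF assms(2) this] show "c = c'" by auto
qed

lemma set_pushout_empty:
  assumes "set_pushout {} B C D f g h k"
  shows "inj_on h B" "inj_on k C" "\<And>b c. b \<in> B \<Longrightarrow> c \<in> C \<Longrightarrow> h b \<noteq> k c" "h ` B \<union> k ` C = D"
proof -
  show "inj_on h B" by (rule inj_onI) (use set_pushout_rel[OF assms, of "Inl x" "Inl y" for x y] in auto)
  show "inj_on k C" by (rule inj_onI) (use set_pushout_rel[OF assms, of "Inr x" "Inr y" for x y] in auto)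
  show "\<And>b c. b \<in> B \<Longrightarrow> c \<in> C \<Longrightarrow> h b \<noteq> k c" using set_pushout_rel[OF assms, of "Inl b" "Inr c" for b c] by auto
  show "h ` B \<union> k ` C = D" using assms unfolding set_pushout_def by auto
qed

lemma set_pushout_intro:
  assumes "\<forall>a\<in>A. h (f a) = k (g a)" "h ` B \<union> k ` C = D" "inj_on h B" "inj_on k C"
    "\<And>b c. b \<in> B \<Longrightarrow> c \<in> C \<Longrightarrow> h b = k c \<Longrightarrow> \<exists>a\<in>A. f a = b \<and> g a = c"
  shows "set_pushout A B C D f g h k"
  unfolding set_pushout_def Let_def
proof (intro conjI assms(1,2) ballI)
  let ?R = "{(Inl (f a), Inr (g a)) | a. a \<in> A}"
  fix x y assume x: "x \<in> B <+> C" and y: "y \<in> B <+> C"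
  show "(case x of Inl x \<Rightarrow> h x | Inr x \<Rightarrow> k x) = (case y of Inl x \<Rightarrow> h x | Inr x \<Rightarrow> k x) \<longleftrightarrow> (x, y) \<in> (?R \<union> ?R\<inverse>)\<^sup>*"
  proof
    assume "(x, y) \<in> (?R \<union> ?R\<inverse>)\<^sup>*"
    then show "(case x of Inl x \<Rightarrow> h x | Inr x \<Rightarrow> k x) = (case y of Inl x \<Rightarrow> h x | Inr x \<Rightarrow> k x)"
      by (rule eqc_fun) (use assms(1) in auto)
  next
    assume eq: "(case x of Inl x \<Rightarrow> h x | Inr x \<Rightarrow> k x) = (case y of Inl x \<Rightarrow> h x | Inr x \<Rightarrow> k x)"
    show "(x, y) \<in> (?R \<union> ?R\<inverse>)\<^sup>*"
    proof (cases x)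
      case (Inl b)
      show ?thesis
      proof (cases y)
        case (Inl b')
        then show ?thesis using \<open>x = Inl b\<close> x y eq assms(3) by (auto dest: inj_onD)
      next
        case (Inr c)
        then obtain a where "a \<in> A" "f a = b" "g a = c" using \<open>x = Inl b\<close> x y eq assms(5) by fastforce
        then show ?thesis using \<open>x = Inl b\<close> Inr by auto
      qed
    next
      case (Inr c)
      show ?thesis
      proof (cases y)
        case (Inl b)
        then obtain a where "a \<in> A" "f a = b" "g a = c" using \<open>x = Inr c\<close> x y eq assms(5) by fastforce
        then have "(y, x) \<in> ?R" using Inl \<open>x = Inr c\<close> by auto
        then show ?thesis by auto
      next
        case (Inr c')
        then show ?thesis using \<open>x = Inr c\<close> x y eq assms(4) by (auto dest: inj_onD)
      qed
    qed
  qed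
qed

section \<open>Degrees\<close>

lemma finite_deg_set:
  assumes "finite (hE G)"
  shows "finite {(e, i). e \<in> hE G \<and> i < length (f e) \<and> P e i}"
proof -
  have "{(e, i). e \<in> hE G \<and> i < length (f e) \<and> P e i} \<subseteq> Sigma (hE G) (\<lambda>e. {..<length (f e)})" by auto
  then show ?thesis using assms by (meson finite_SigmaI finite_lessThan finite_subset)
qed

lemma indeg_zero_iff:
  assumes "finite (hE G)"
  shows "indeg G v = 0 \<longleftrightarrow> (\<forall>e\<in>hE G. v \<notin> set (htgt G e))"
  unfolding indeg_def using finite_deg_set[OF assms, of "htgt G" "\<lambda>e i. htgt G e ! i = v"]
  by (auto simp: in_set_conv_nth)

lemma outdeg_zero_iff:
  assumes "finite (hE G)"
  shows "outdeg G v = 0 \<longleftrightarrow> (\<forall>e\<in>hE G. v \<notin> set (hsrc G e))"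
  unfolding outdeg_def using finite_deg_set[OF assms, of "hsrc G" "\<lambda>e i. hsrc G e ! i = v"]
  by (auto simp: in_set_conv_nth)

lemma indeg_two:
  assumes "finite (hE G)" "e1 \<in> hE G" "e2 \<in> hE G" "i1 < length (htgt G e1)" "i2 < length (htgt G e2)"
    "htgt G e1 ! i1 = v" "htgt G e2 ! i2 = v" "(e1, i1) \<noteq> (e2, i2)"
  shows "indeg G v \<ge> 2"
proof -
  have "{(e1, i1), (e2, i2)} \<subseteq> {(e, i). e \<in> hE G \<and> i < length (htgt G e) \<and> htgt G e ! i = v}"
    using assms by auto
  from card_mono[OF finite_deg_set[OF assms(1)] this] show ?thesis
    using assms(8) unfolding indeg_def by auto
qed

lemma outdeg_two:
  assumes "finite (hE G)" "e1 \<in> hE G" "e2 \<in> hE G" "i1 < length (hsrc G e1)" "i2 < length (hsrc G e2)"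
    "hsrc G e1 ! i1 = v" "hsrc G e2 ! i2 = v" "(e1, i1) \<noteq> (e2, i2)"
  shows "outdeg G v \<ge> 2"
proof -
  have "{(e1, i1), (e2, i2)} \<subseteq> {(e, i). e \<in> hE G \<and> i < length (hsrc G e) \<and> hsrc G e ! i = v}"
    using assms by auto
  from card_mono[OF finite_deg_set[OF assms(1)] this] show ?thesis
    using assms(8) unfolding outdeg_def by auto
qed

lemma indeg_mono:
  assumes "hom G H fv fe" "inj_on fe (hE G)" "finite (hE H)"
  shows "indeg G v \<le> indeg H (fv v)"
  unfolding indeg_def
proof (rule card_inj_on_le[where f = "\<lambda>(e, i). (fe e, i)"])
  show "inj_on (\<lambda>(e, i). (fe e, i)) {(e, i). e \<in> hE G \<and> i < length (htgt G e) \<and> htgt G e ! i = v}"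
    using assms(2) by (auto simp: inj_on_def)
  show "(\<lambda>(e, i). (fe e, i)) ` {(e, i). e \<in> hE G \<and> i < length (htgt G e) \<and> htgt G e ! i = v}
    \<subseteq> {(e, i). e \<in> hE H \<and> i < length (htgt H e) \<and> htgt H e ! i = fv v}"
    using assms(1) unfolding hom_def by auto
  show "finite {(e, i). e \<in> hE H \<and> i < length (htgt H e) \<and> htgt H e ! i = fv v}"
    by (rule finite_deg_set[OF assms(3)])
qed

lemma outdeg_mono:
  assumes "hom G H fv fe" "inj_on fe (hE G)" "finite (hE H)"
  shows "outdeg G v \<le> outdeg H (fv v)"
  unfolding outdeg_def
proof (rule card_inj_on_le[where f = "\<lambda>(e, i). (fe e, i)"])
  show "inj_on (\<lambda>(e, i). (fe e, i)) {(e, i). e \<in> hE G \<and> i < length (hsrc G e) \<and> hsrc G e ! i = v}"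
    using assms(2) by (auto simp: inj_on_def)
  show "(\<lambda>(e, i). (fe e, i)) ` {(e, i). e \<in> hE G \<and> i < length (hsrc G e) \<and> hsrc G e ! i = v}
    \<subseteq> {(e, i). e \<in> hE H \<and> i < length (hsrc H e) \<and> hsrc H e ! i = fv v}"
    using assms(1) unfolding hom_def by auto
  show "finite {(e, i). e \<in> hE H \<and> i < length (hsrc H e) \<and> hsrc H e ! i = fv v}"
    by (rule finite_deg_set[OF assms(3)])
qed

section \<open>Paths and homs\<close>

lemma hom_path:
  assumes "hom G H fv fe" "is_path G es"
  shows "is_path H (map fe es)"
proof -
  have s: "\<forall>e\<in>set es. hsrc H (fe e) = map fv (hsrc G e) \<and> htgt H (fe e) = map fv (htgt G e) \<and> fe e \<in> hE H"
    using assms unfolding hom_def is_path_def by auto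
  show ?thesis unfolding is_path_def
  proof (intro conjI allI impI)
    show "map fe es \<noteq> []" using assms(2) unfolding is_path_def by auto
    show "set (map fe es) \<subseteq> hE H" using s by auto
    fix k assume k: "Suc k < length (map fe es)"
    then have "set (htgt G (es ! k)) \<inter> set (hsrc G (es ! Suc k)) \<noteq> {}" using assms(2) unfolding is_path_def by auto
    moreover have "es ! k \<in> set es" "es ! Suc k \<in> set es" using k by auto
    ultimately show "set (htgt H (map fe es ! k)) \<inter> set (hsrc H (map fe es ! Suc k)) \<noteq> {}"
      using s k by fastforce
  qed
qed

lemma hom_cycle:
  assumes "hom G H fv fe" "is_cycle G es"
  shows "is_cycle H (map fe es)"
proof -
  have p: "is_path G es" using assms unfolding is_cycle_def by auto
  then have ne: "es \<noteq> []" "hd es \<in> hE G" "last es \<in> hE G" unfolding is_path_def by auto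
  then have "hsrc H (fe (hd es)) = map fv (hsrc G (hd es))" "htgt H (fe (last es)) = map fv (htgt G (last es))"
    using assms p unfolding hom_def is_path_def by auto
  then show ?thesis using hom_path[OF assms(1) p] assms(2) ne unfolding is_cycle_def
    by (auto simp: hd_map last_map)
qed

lemma hom_path_from_to:
  assumes "hom G H fv fe" "path_from_to G es v w"
  shows "path_from_to H (map fe es) (fv v) (fv w)"
proof -
  have p: "is_path G es" using assms unfolding path_from_to_def by auto
  then have ne: "es \<noteq> []" "hd es \<in> hE G" "last es \<in> hE G" unfolding is_path_def by auto
  then have "hsrc H (fe (hd es)) = map fv (hsrc G (hd es))" "htgt H (fe (last es)) = map fv (htgt G (last es))"
    using assms p unfolding hom_def is_path_def by auto
  then show ?thesis using hom_path[OF assms(1) p] assms(2) ne unfolding path_from_to_def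
    by (auto simp: hd_map last_map)
qed

lemma hom_comp:
  assumes "hom G H fv fe" "hom H K gv ge"
  shows "hom G K (gv \<circ> fv) (ge \<circ> fe)"
  using assms unfolding hom_def by auto

lemma ma_from_hom:
  assumes "hom G H fv fe" "inj_on fe (hE G)" "finite (hE H)" "ma H"
  shows "ma G"
  unfolding ma_def
proof (intro conjI allI ballI)
  fix es show "\<not> is_cycle G es" using hom_cycle[OF assms(1)] assms(4) unfolding ma_def by blast
next
  fix v assume v: "v \<in> hV G"
  then have "fv v \<in> hV H" using assms(1) unfolding hom_def by auto
  then show "indeg G v \<le> 1" "outdeg G v \<le> 1"
    using indeg_mono[OF assms(1-3), of v] outdeg_mono[OF assms(1-3), of v] assms(4) unfolding ma_def by fastforce+
qed


lemma pushout_hg_discrete: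
  assumes "pushout_hg (discrete X :: ('x, 'y, 'l) hg) B C D fv fe gv ge hv he kv ke"
  shows "\<forall>x\<in>X. fv x \<in> hV B" "\<forall>x\<in>X. gv x \<in> hV C" "hom B D hv he" "hom C D kv ke"
    "set_pushout X (hV B) (hV C) (hV D) fv gv hv kv"
    "set_pushout ({}::'y set) (hE B) (hE C) (hE D) fe ge he ke"
proof -
  have d: "hV (discrete X :: ('x, 'y, 'l) hg) = X" "hE (discrete X :: ('x, 'y, 'l) hg) = {}"
    by (simp_all add: discrete_def)
  have p: "hom (discrete X :: ('x, 'y, 'l) hg) B fv fe" "hom (discrete X :: ('x, 'y, 'l) hg) C gv ge"
    "hom B D hv he" "hom C D kv ke"
    "set_pushout (hV (discrete X :: ('x, 'y, 'l) hg)) (hV B) (hV C) (hV D) fv gv hv kv"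
    "set_pushout (hE (discrete X :: ('x, 'y, 'l) hg)) (hE B) (hE C) (hE D) fe ge he ke"
    using assms unfolding pushout_hg_def by blast+
  show "\<forall>x\<in>X. fv x \<in> hV B" "\<forall>x\<in>X. gv x \<in> hV C" using p(1,2) unfolding hom_def d by blast+
  show "hom B D hv he" "hom C D kv ke" by (rule p(3), rule p(4))
  show "set_pushout X (hV B) (hV C) (hV D) fv gv hv kv" using p(5) unfolding d .
  show "set_pushout ({}::'y set) (hE B) (hE C) (hE D) fe ge he ke" using p(6) unfolding d .
qed



lemma hom_discrete: "hom (discrete X) G f fe \<longleftrightarrow> (\<forall>x\<in>X. f x \<in> hV G)"
  unfolding hom_def discrete_def by simp

locale dtrans =
  fixes sig :: "('l \<times> nat \<times> nat) set" and \<rho> :: "('k, 'v, 'e, 'l) rule"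
    and S :: "('a, 'b, 'l) hg" and mv :: "'v \<Rightarrow> 'a" and me :: "'e \<Rightarrow> 'b"
    and S' :: "('c, 'd, 'l) hg" and q :: "'a \<Rightarrow> 'c" and qe :: "'b \<Rightarrow> 'd"
    and C' :: "('c, 'd, 'l) hg" and g'v :: "'c \<Rightarrow> 'c" and g'e :: "'d \<Rightarrow> 'd"
  assumes rule: "left_connected_rule sig \<rho>"
    and hS: "hyp sig S" and maS: "ma S" and hS': "hyp sig S'"
    and qhom: "hom S S' q qe" and qe_inj: "inj_on qe (hE S)"
    and q_glue: "\<And>x y. x \<in> hV S \<Longrightarrow> y \<in> hV S \<Longrightarrow> q x = q y \<Longrightarrow> x \<noteq> y \<Longrightarrow> x \<in> inn S \<union> outn S"
    and mono: "mono_hom (rL \<rho>) S mv me"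
    and der': "deriv sig \<rho> S' (q \<circ> mv) (qe \<circ> me) C' g'v g'e"
begin

abbreviation "L \<equiv> rL \<rho>"
abbreviation "R \<equiv> rR \<rho>"
abbreviation "A \<equiv> rI \<rho> <+> rO \<rho>"
abbreviation "fL \<equiv> case_sum (riL \<rho>) (roL \<rho>)"
abbreviation "fR \<equiv> case_sum (riR \<rho>) (roR \<rho>)"

definition kv :: "'k + 'k \<Rightarrow> 'a" where "kv = mv \<circ> fL"

definition Cg :: "('a, 'b, 'l) hg" where
  "Cg = \<lparr> hV = hV S - (mv ` hV L - mv ` fL ` A), hE = hE S - me ` hE L,
     hsrc = hsrc S, htgt = htgt S, hlab = hlab S \<rparr>"

lemma Cg_simps[simp]: "hV Cg = hV S - (mv ` hV L - mv ` fL ` A)" "hE Cg = hE S - me ` hE L"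
  "hsrc Cg = hsrc S" "htgt Cg = htgt S" "hlab Cg = hlab S"
  unfolding Cg_def by simp_all

lemma rule_facts:
  shows "finite (rI \<rho>)" "finite (rO \<rho>)" "hyp sig L" "hyp sig R" "ma L" "ma R"
    "inj_on (riL \<rho>) (rI \<rho>)" "riL \<rho> ` rI \<rho> = inn L" "inj_on (roL \<rho>) (rO \<rho>)" "roL \<rho> ` rO \<rho> = outn L"
    "inj_on (riR \<rho>) (rI \<rho>)" "riR \<rho> ` rI \<rho> = inn R" "inj_on (roR \<rho>) (rO \<rho>)" "roR \<rho> ` rO \<rho> = outn R"
    "inj_on fL A" "strongly_connected L"
  using rule unfolding left_connected_rule_def ma_cospan_def by auto

lemma finL: "finite (hE L)" "finite (hV L)" using rule_facts(3) unfolding hyp_def by auto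
lemma finR: "finite (hE R)" "finite (hV R)" using rule_facts(4) unfolding hyp_def by auto
lemma finS: "finite (hE S)" "finite (hV S)" using hS unfolding hyp_def by auto
lemma finS': "finite (hE S')" "finite (hV S')" using hS' unfolding hyp_def by auto

lemma fL_in: "a \<in> A \<Longrightarrow> fL a \<in> hV L"
  using rule_facts(8,10) unfolding inn_def outn_def by auto

lemma fR_in: "a \<in> A \<Longrightarrow> fR a \<in> hV R"
  using rule_facts(12,14) unfolding inn_def outn_def by auto

lemma fL_A: "fL ` A = inn L \<union> outn L"
  unfolding rule_facts(8)[symmetric] rule_facts(10)[symmetric] by (simp add: Plus_def image_Un image_image)

lemma riL_roL: "k \<in> rI \<rho> \<Longrightarrow> k' \<in> rO \<rho> \<Longrightarrow> riL \<rho> k \<noteq> roL \<rho> k'"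
  using inj_onD[OF rule_facts(15), of "Inl k" "Inr k'"] by auto

lemma riL_not_out: "k \<in> rI \<rho> \<Longrightarrow> riL \<rho> k \<notin> outn L"
  using riL_roL unfolding rule_facts(10)[symmetric] by auto

lemma roL_not_in: "k' \<in> rO \<rho> \<Longrightarrow> roL \<rho> k' \<notin> inn L"
  using riL_roL unfolding rule_facts(8)[symmetric] by force

lemma mhom: "hom L S mv me" and minj: "inj_on mv (hV L)" and meinj: "inj_on me (hE L)"
  using mono unfolding mono_hom_def by auto

lemma m_in: "v \<in> hV L \<Longrightarrow> mv v \<in> hV S"
  using mhom unfolding hom_def by auto

lemma me_in: "e \<in> hE L \<Longrightarrow> me e \<in> hE S"
  using mhom unfolding hom_def by auto

lemma m_inn: "v \<in> hV L \<Longrightarrow> mv v \<in> inn S \<Longrightarrow> v \<in> inn L"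
  using indeg_mono[OF mhom meinj finS(1), of v] unfolding inn_def by auto

lemma m_outn: "v \<in> hV L \<Longrightarrow> mv v \<in> outn S \<Longrightarrow> v \<in> outn L"
  using outdeg_mono[OF mhom meinj finS(1), of v] unfolding outn_def by auto

lemma kv_inn: "a \<in> A \<Longrightarrow> kv a \<in> inn S \<Longrightarrow> \<exists>k\<in>rI \<rho>. a = Inl k"
proof -
  assume a: "a \<in> A" "kv a \<in> inn S"
  then have i: "fL a \<in> inn L" using m_inn[OF fL_in[OF a(1)]] unfolding kv_def by simp
  show ?thesis
  proof (cases a)
    case (Inl k) then show ?thesis using a by auto
  next
    case (Inr k) then show ?thesis using a i roL_not_in by auto
  qed
qed

lemma kv_outn: "a \<in> A \<Longrightarrow> kv a \<in> outn S \<Longrightarrow> \<exists>k\<in>rO \<rho>. a = Inr k"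
proof -
  assume a: "a \<in> A" "kv a \<in> outn S"
  then have i: "fL a \<in> outn L" using m_outn[OF fL_in[OF a(1)]] unfolding kv_def by simp
  show ?thesis
  proof (cases a)
    case (Inr k) then show ?thesis using a by auto
  next
    case (Inl k) then show ?thesis using a i riL_not_out by auto
  qed
qed

lemma kv_inj: "inj_on kv A"
proof -
  have "inj_on mv (fL ` A)" using minj fL_in by (meson image_subsetI inj_on_subset)
  then show ?thesis unfolding kv_def using rule_facts(15) by (rule comp_inj_on[rotated])
qed

lemma der'_facts:
  obtains kv' :: "'k + 'k \<Rightarrow> 'c" and dn' dm' :: "'c \<Rightarrow> 'c" and T' :: "(('v + 'c) set, ('e + 'd) set, 'l) hg"
    and hv' he' rv' re'
  where "convex_match L S' (q \<circ> mv) (qe \<circ> me)" "hyp sig C'"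
    "pushout_hg (discrete A :: ('k + 'k, 'e, 'l) hg) L C' S' fL (\<lambda>_. undefined) kv' (\<lambda>_. undefined) (q \<circ> mv) (qe \<circ> me) g'v g'e"
    "pushout_hg (discrete A :: ('k + 'k, 'e, 'l) hg) R C' T' fR (\<lambda>_. undefined) kv' (\<lambda>_. undefined) rv' re' hv' he'"
    "hyp sig T'" "ma T'"
  using der' unfolding deriv_def ma_cospan_def
  apply (elim conjE exE)
  apply (rule that)
  apply assumption+
  done

end


context dtrans begin

lemma S'_all:
  obtains kv' :: "'k + 'k \<Rightarrow> 'c" and T' :: "(('v + 'c) set, ('e + 'd) set, 'l) hg" and rv' re' hv' he'
  where "\<forall>a\<in>A. kv' a \<in> hV C'" "hom C' S' g'v g'e"
    "set_pushout A (hV L) (hV C') (hV S') fL kv' (q \<circ> mv) g'v"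
    "set_pushout ({}::'e set) (hE L) (hE C') (hE S') (\<lambda>_. undefined) (\<lambda>_. undefined) (qe \<circ> me) g'e"
    "hyp sig C'" "convex_match L S' (q \<circ> mv) (qe \<circ> me)"
    "hom R T' rv' re'" "hom C' T' hv' he'" "\<forall>a\<in>A. rv' (fR a) = hv' (kv' a)"
    "set_pushout ({}::'e set) (hE R) (hE C') (hE T') (\<lambda>_. undefined) (\<lambda>_. undefined) re' he'"
    "hyp sig T'" "ma T'"
proof -
  obtain kv' :: "'k + 'k \<Rightarrow> 'c" and dn' dm' :: "'c \<Rightarrow> 'c" and T' :: "(('v + 'c) set, ('e + 'd) set, 'l) hg"
    and hv' he' rv' re'
  where h: "convex_match L S' (q \<circ> mv) (qe \<circ> me)" "hyp sig C'"
    "pushout_hg (discrete A :: ('k + 'k, 'e, 'l) hg) L C' S' fL (\<lambda>_. undefined) kv' (\<lambda>_. undefined) (q \<circ> mv) (qe \<circ> me) g'v g'e"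
    "pushout_hg (discrete A :: ('k + 'k, 'e, 'l) hg) R C' T' fR (\<lambda>_. undefined) kv' (\<lambda>_. undefined) rv' re' hv' he'"
    "hyp sig T'" "ma T'"
    by (rule der'_facts)
  note p1 = pushout_hg_discrete[OF h(3)] and p2 = pushout_hg_discrete[OF h(4)]
  show ?thesis
    by (rule that[of kv' T' rv' re' hv' he', OF p1(2) p1(4) p1(5) p1(6) h(2) h(1) p2(3) p2(4)
       set_pushout_comm[OF p2(5)] p2(6) h(5) h(6)])
qed

lemma g'v_inj:
  assumes "set_pushout A (hV L) (hV C') (hV S') fL kv' (q \<circ> mv) g'v"
  shows "inj_on g'v (hV C')"
  by (rule set_pushout_k_inj[OF assms rule_facts(15)])

lemma q_in: "x \<in> hV S \<Longrightarrow> q x \<in> hV S'" using qhom unfolding hom_def by auto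
lemma qe_props: "e \<in> hE S \<Longrightarrow> qe e \<in> hE S' \<and> hsrc S' (qe e) = map q (hsrc S e) \<and>
   htgt S' (qe e) = map q (htgt S e) \<and> hlab S' (qe e) = hlab S e"
  using qhom unfolding hom_def by auto

lemma S_edge: "e \<in> hE S \<Longrightarrow> set (hsrc S e) \<subseteq> hV S \<and> set (htgt S e) \<subseteq> hV S \<and> hlab S e \<in> sig \<and>
  hlab S e = (fst (hlab S e), length (hsrc S e), length (htgt S e))"
  using hS unfolding hyp_def by auto

lemma L_edge: "e \<in> hE L \<Longrightarrow> set (hsrc L e) \<subseteq> hV L \<and> set (htgt L e) \<subseteq> hV L"
  using rule_facts(3) unfolding hyp_def by auto

lemma R_edge: "e \<in> hE R \<Longrightarrow> set (hsrc R e) \<subseteq> hV R \<and> set (htgt R e) \<subseteq> hV R \<and> hlab R e \<in> sig \<and>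
  hlab R e = (fst (hlab R e), length (hsrc R e), length (htgt R e))"
  using rule_facts(4) unfolding hyp_def by auto

lemma me_props: "e \<in> hE L \<Longrightarrow> me e \<in> hE S \<and> hsrc S (me e) = map mv (hsrc L e) \<and>
   htgt S (me e) = map mv (htgt L e) \<and> hlab S (me e) = hlab L e"
  using mhom unfolding hom_def by auto

lemma psie_ex:
  assumes "e \<in> hE Cg"
  shows "\<exists>!c. c \<in> hE C' \<and> g'e c = qe e"
proof -
  obtain kv' :: "'k + 'k \<Rightarrow> 'c" and T' :: "(('v + 'c) set, ('e + 'd) set, 'l) hg" and rv' re' hv' he'
    where h: "set_pushout ({}::'e set) (hE L) (hE C') (hE S') (\<lambda>_. undefined) (\<lambda>_. undefined) (qe \<circ> me) g'e"
    by (rule S'_all)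
  have e: "e \<in> hE S" "e \<notin> me ` hE L" using assms by auto
  then have "qe e \<in> hE S'" using qe_props by blast
  then have "qe e \<in> (qe \<circ> me) ` hE L \<union> g'e ` hE C'" using set_pushout_empty(4)[OF h] by simp
  moreover have "qe e \<notin> (qe \<circ> me) ` hE L"
  proof
    assume "qe e \<in> (qe \<circ> me) ` hE L"
    then obtain l where l: "l \<in> hE L" "qe e = qe (me l)" by auto
    have "me l \<in> hE S" using me_in[OF l(1)] .
    then have "e = me l" using inj_onD[OF qe_inj l(2)] e(1) by blast
    then show False using e l by blast
  qed
  ultimately have "qe e \<in> g'e ` hE C'" by blast
  then obtain c where c0: "c \<in> hE C'" "qe e = g'e c" by (rule imageE)
  then have c: "c \<in> hE C'" "g'e c = qe e" by simp_all
  have inj: "inj_on g'e (hE C')" by (rule set_pushout_empty(2)[OF h])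
  show ?thesis
  proof (rule ex1I[of _ c])
    show "c \<in> hE C' \<and> g'e c = qe e" using c by blast
    fix y assume "y \<in> hE C' \<and> g'e y = qe e"
    then show "y = c" using c inj_onD[OF inj, of y c] by auto
  qed
qed

definition psie :: "'b \<Rightarrow> 'd" where "psie e = (THE c. c \<in> hE C' \<and> g'e c = qe e)"

lemma psie: "e \<in> hE Cg \<Longrightarrow> psie e \<in> hE C' \<and> g'e (psie e) = qe e"
  unfolding psie_def by (rule theI'[OF psie_ex])

lemma dangling:
  assumes e: "e \<in> hE Cg" and s: "s \<in> set (hsrc S e) \<union> set (htgt S e)"
  shows "s \<in> hV Cg"
proof (rule ccontr)
  assume ns: "s \<notin> hV Cg"
  obtain kv' :: "'k + 'k \<Rightarrow> 'c" and T' :: "(('v + 'c) set, ('e + 'd) set, 'l) hg" and rv' re' hv' he'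
    where h: "hom C' S' g'v g'e" "set_pushout A (hV L) (hV C') (hV S') fL kv' (q \<circ> mv) g'v" "hyp sig C'"
    by (rule S'_all)
  have eS: "e \<in> hE S" using e by auto
  then have sS: "s \<in> hV S" using S_edge s by auto
  with ns obtain v where v: "v \<in> hV L" "s = mv v" "v \<notin> fL ` A" by auto
  obtain c where c: "c \<in> hE C'" "g'e c = qe e" using psie[OF e] by blast
  have "q s \<in> set (hsrc S' (qe e)) \<union> set (htgt S' (qe e))" using qe_props[OF eS] s by auto
  then have "q s \<in> set (map g'v (hsrc C' c)) \<union> set (map g'v (htgt C' c))"
    using c h(1) unfolding hom_def by auto
  then obtain y where y: "y \<in> set (hsrc C' c) \<union> set (htgt C' c)" "q s = g'v y" by auto
  have "y \<in> hV C'" using y(1) c(1) h(3) unfolding hyp_def by auto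
  from set_pushout_hk[OF h(2) v(1) this] y(2) v(2) obtain a where "a \<in> A" "fL a = v" by auto
  then show False using v by auto
qed

lemma hyp_Cg: "hyp sig Cg"
  unfolding hyp_def
proof (intro conjI ballI)
  show "finite (hV Cg)" "finite (hE Cg)" using finS by auto
  fix e assume e: "e \<in> hE Cg"
  then show "set (hsrc Cg e) \<subseteq> hV Cg" "set (htgt Cg e) \<subseteq> hV Cg" using dangling by auto
  show "hlab Cg e \<in> sig" "hlab Cg e = (fst (hlab Cg e), length (hsrc Cg e), length (htgt Cg e))"
    using S_edge e by auto
qed

lemma psiv_ex:
  assumes x: "x \<in> hV Cg"
  shows "\<exists>!y. y \<in> hV C' \<and> g'v y = q x"
proof -
  obtain kv' :: "'k + 'k \<Rightarrow> 'c" and T' :: "(('v + 'c) set, ('e + 'd) set, 'l) hg" and rv' re' hv' he'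
    where h: "\<forall>a\<in>A. kv' a \<in> hV C'" "set_pushout A (hV L) (hV C') (hV S') fL kv' (q \<circ> mv) g'v"
    by (rule S'_all)
  have xS: "x \<in> hV S" using x by simp
  have qx: "q x \<in> (q \<circ> mv) ` hV L \<union> g'v ` hV C'"
    using q_in[OF xS] set_pushout_img[OF h(2)] by simp
  have ex: "\<exists>y. y \<in> hV C' \<and> g'v y = q x"
  proof (cases "q x \<in> g'v ` hV C'")
    case True
    then obtain y where "y \<in> hV C'" "q x = g'v y" by (rule imageE)
    then show ?thesis by metis
  next
    case False
    then have "q x \<in> (q \<circ> mv) ` hV L" using qx by blast
    then obtain v where v: "v \<in> hV L" "q x = q (mv v)" by auto
    have "\<exists>a\<in>A. fL a = v"
    proof (cases "x = mv v")
      case True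
      have "x \<in> mv ` hV L" using True v(1) by blast
      then have "x \<in> mv ` fL ` A" using x unfolding Cg_simps by blast
      then obtain a where a: "a \<in> A" "x = mv (fL a)" by blast
      have fa: "fL a \<in> hV L" by (rule fL_in[OF a(1)])
      have "mv (fL a) = mv v" using True a(2) by metis
      then have "fL a = v" using inj_onD[OF minj _ fa v(1)] by metis
      then show ?thesis using a(1) by blast
    next
      case False
      have mvS: "mv v \<in> hV S" by (rule m_in[OF v(1)])
      have "mv v \<noteq> x" using False by blast
      then have "mv v \<in> inn S \<union> outn S" by (rule q_glue[OF mvS xS v(2)[symmetric]])
      then have "v \<in> inn L \<union> outn L" using m_inn[OF v(1)] m_outn[OF v(1)] by blast
      then show ?thesis unfolding fL_A[symmetric] by blast
    qed
    then obtain a where a: "a \<in> A" "fL a = v" by blast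
    have "q (mv (fL a)) = g'v (kv' a)" using a(1) set_pushout_comm[OF h(2)] by simp
    then have qx2: "q x = g'v (kv' a)" using v(2) a(2) by simp
    have "kv' a \<in> hV C'" using h(1) a(1) by blast
    then show ?thesis using qx2 by (intro exI[of _ "kv' a"]) simp
  qed
  have inj: "inj_on g'v (hV C')" by (rule g'v_inj[OF h(2)])
  from ex obtain y where y: "y \<in> hV C'" "g'v y = q x" by blast
  show ?thesis
  proof (rule ex1I[of _ y])
    show "y \<in> hV C' \<and> g'v y = q x" using y by blast
    fix z assume "z \<in> hV C' \<and> g'v z = q x"
    then show "z = y" using y inj_onD[OF inj, of z y] by auto
  qed
qed

definition psiv :: "'a \<Rightarrow> 'c" where "psiv x = (THE y. y \<in> hV C' \<and> g'v y = q x)"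

lemma psiv: "x \<in> hV Cg \<Longrightarrow> psiv x \<in> hV C' \<and> g'v (psiv x) = q x"
  unfolding psiv_def by (rule theI'[OF psiv_ex])

lemma psiv_kv:
  assumes "\<forall>a\<in>A. kv' a \<in> hV C'" "set_pushout A (hV L) (hV C') (hV S') fL kv' (q \<circ> mv) g'v" "a \<in> A"
  shows "psiv (kv a) = kv' a"
proof -
  have "kv a \<in> hV Cg" using assms(3) fL_in m_in unfolding kv_def by auto
  then have p: "psiv (kv a) \<in> hV C'" "g'v (psiv (kv a)) = q (kv a)" using psiv by auto
  have "q (kv a) = g'v (kv' a)" using set_pushout_comm[OF assms(2)] assms(3) unfolding kv_def by auto
  then show ?thesis using p assms(1,3) inj_onD[OF g'v_inj[OF assms(2)]] by auto
qed

lemma psi_hom: "hom Cg C' psiv psie"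
proof -
  obtain kv' :: "'k + 'k \<Rightarrow> 'c" and T' :: "(('v + 'c) set, ('e + 'd) set, 'l) hg" and rv' re' hv' he'
    where h: "hom C' S' g'v g'e" "set_pushout A (hV L) (hV C') (hV S') fL kv' (q \<circ> mv) g'v" "hyp sig C'"
    by (rule S'_all)
  note inj = g'v_inj[OF h(2)]
  show ?thesis unfolding hom_def
  proof (intro conjI ballI)
    fix v assume "v \<in> hV Cg" then show "psiv v \<in> hV C'" using psiv by auto
  next
    fix e assume e: "e \<in> hE Cg"
    have eS: "e \<in> hE S" using e by auto
    have pe: "psie e \<in> hE C'" "g'e (psie e) = qe e" using psie[OF e] by auto
    have C'e: "set (hsrc C' (psie e)) \<subseteq> hV C'" "set (htgt C' (psie e)) \<subseteq> hV C'"
      using pe(1) h(3) unfolding hyp_def by auto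
    have Cge: "set (hsrc S e) \<subseteq> hV Cg" "set (htgt S e) \<subseteq> hV Cg" using dangling[OF e] by auto
    have g': "hsrc S' (g'e (psie e)) = map g'v (hsrc C' (psie e))" "htgt S' (g'e (psie e)) = map g'v (htgt C' (psie e))"
      "hlab S' (g'e (psie e)) = hlab C' (psie e)"
      using h(1) pe(1) unfolding hom_def by auto
    show "psie e \<in> hE C'" by (rule pe(1))
    have allhsrc: "\<forall>x\<in>set (hsrc S e). g'v (psiv x) = q x" using Cge(1) psiv by blast
    have "map g'v (hsrc C' (psie e)) = hsrc S' (qe e)" using g' pe by simp
    also have "\<dots> = map q (hsrc S e)" using qe_props[OF eS] by simp
    also have "\<dots> = map (g'v \<circ> psiv) (hsrc S e)" by (rule map_cong[OF refl]) (use allhsrc in simp)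
    finally have "map g'v (hsrc C' (psie e)) = map g'v (map psiv (hsrc Cg e))" by simp
    moreover have "\<forall>x\<in>set (hsrc S e). psiv x \<in> hV C'" using Cge(1) psiv by blast
    then have "set (map psiv (hsrc Cg e)) \<subseteq> hV C'" by auto
    ultimately have eqhsrc: "map g'v (hsrc C' (psie e)) = map g'v (map psiv (hsrc Cg e))"
      and subhsrc: "set (map psiv (hsrc Cg e)) \<subseteq> hV C'" by blast+
    have "inj_on g'v (set (hsrc C' (psie e)) \<union> set (map psiv (hsrc Cg e)))"
      by (rule inj_on_subset[OF inj]) (use C'e(1) subhsrc in blast)
    then show "hsrc C' (psie e) = map psiv (hsrc Cg e)" using eqhsrc inj_on_map_eq_map by blast
    have allhtgt: "\<forall>x\<in>set (htgt S e). g'v (psiv x) = q x" using Cge(2) psiv by blast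
    have "map g'v (htgt C' (psie e)) = htgt S' (qe e)" using g' pe by simp
    also have "\<dots> = map q (htgt S e)" using qe_props[OF eS] by simp
    also have "\<dots> = map (g'v \<circ> psiv) (htgt S e)" by (rule map_cong[OF refl]) (use allhtgt in simp)
    finally have "map g'v (htgt C' (psie e)) = map g'v (map psiv (htgt Cg e))" by simp
    moreover have "\<forall>x\<in>set (htgt S e). psiv x \<in> hV C'" using Cge(2) psiv by blast
    then have "set (map psiv (htgt Cg e)) \<subseteq> hV C'" by auto
    ultimately have eqhtgt: "map g'v (htgt C' (psie e)) = map g'v (map psiv (htgt Cg e))"
      and subhtgt: "set (map psiv (htgt Cg e)) \<subseteq> hV C'" by blast+
    have "inj_on g'v (set (htgt C' (psie e)) \<union> set (map psiv (htgt Cg e)))"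
      by (rule inj_on_subset[OF inj]) (use C'e(2) subhtgt in blast)
    then show "htgt C' (psie e) = map psiv (htgt Cg e)" using eqhtgt inj_on_map_eq_map by blast
    show "hlab C' (psie e) = hlab Cg e" using g' pe qe_props[OF eS] by auto
  qed
qed

end


context dtrans begin

lemma kv_in_Cg: "a \<in> A \<Longrightarrow> kv a \<in> hV Cg"
proof -
  assume a: "a \<in> A"
  have "mv (fL a) \<in> hV S" using m_in[OF fL_in[OF a]] .
  moreover have "mv (fL a) \<in> mv ` fL ` A" using a by blast
  ultimately show "kv a \<in> hV Cg" unfolding kv_def Cg_simps by simp
qed

lemma Cg_sub: "hV Cg \<subseteq> hV S" "hE Cg \<subseteq> hE S" by auto

lemma Cg_L: "x \<in> hV Cg \<Longrightarrow> x \<in> mv ` hV L \<Longrightarrow> \<exists>a\<in>A. x = kv a"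
  unfolding Cg_simps kv_def by auto

lemma po_L: "pushout_hg (discrete A :: ('k + 'k, 'e, 'l) hg) L Cg S fL (\<lambda>_. undefined) kv (\<lambda>_. undefined) mv me id id"
proof -
  have d: "hV (discrete A :: ('k + 'k, 'e, 'l) hg) = A" "hE (discrete A :: ('k + 'k, 'e, 'l) hg) = {}"
    by (simp_all add: discrete_def)
  have h1: "hom (discrete A :: ('k + 'k, 'e, 'l) hg) L fL (\<lambda>_. undefined)"
    unfolding hom_discrete using fL_in by blast
  have h2: "hom (discrete A :: ('k + 'k, 'e, 'l) hg) Cg kv (\<lambda>_. undefined)"
    unfolding hom_discrete using kv_in_Cg by blast
  have h4: "hom Cg S id id" unfolding hom_def by auto
  have s1: "set_pushout A (hV L) (hV Cg) (hV S) fL kv mv id"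
  proof (rule set_pushout_intro)
    show "\<forall>a\<in>A. mv (fL a) = id (kv a)" unfolding kv_def by simp
    show "mv ` hV L \<union> id ` hV Cg = hV S" using m_in by auto
    show "inj_on mv (hV L)" by (rule minj)
    show "inj_on id (hV Cg)" by simp
    fix b c assume bc: "b \<in> hV L" "c \<in> hV Cg" "mv b = id c"
    then have "c \<in> mv ` hV L" by auto
    from Cg_L[OF bc(2) this] obtain a where a: "a \<in> A" "c = kv a" by blast
    have "mv (fL a) = mv b" using bc(3) a(2) unfolding kv_def by simp
    then have "fL a = b" using inj_onD[OF minj _ fL_in[OF a(1)] bc(1)] by blast
    then show "\<exists>a\<in>A. fL a = b \<and> kv a = c" using a by blast
  qed
  have s2: "set_pushout ({}::'e set) (hE L) (hE Cg) (hE S) (\<lambda>_. undefined) (\<lambda>_. undefined) me id"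
    by (rule set_pushout_intro) (use me_in meinj in auto)
  show ?thesis unfolding pushout_hg_def d using h1 h2 mhom h4 s1 s2 by blast
qed

lemma convex: "convex_match L S mv me"
  unfolding convex_match_def
proof (intro conjI allI impI mono)
  fix v w es assume a: "v \<in> mv ` hV L \<and> w \<in> mv ` hV L \<and> path_from_to S es v w"
  obtain kv' :: "'k + 'k \<Rightarrow> 'c" and T' :: "(('v + 'c) set, ('e + 'd) set, 'l) hg" and rv' re' hv' he'
    where h: "convex_match L S' (q \<circ> mv) (qe \<circ> me)" by (rule S'_all)
  have p: "path_from_to S' (map qe es) (q v) (q w)" using hom_path_from_to[OF qhom] a by blast
  have "q v \<in> (q \<circ> mv) ` hV L" "q w \<in> (q \<circ> mv) ` hV L" using a by auto
  then have sub: "set (map qe es) \<subseteq> (qe \<circ> me) ` hE L" using h p unfolding convex_match_def by blast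
  have esS: "set es \<subseteq> hE S" using a unfolding path_from_to_def is_path_def by blast
  show "set es \<subseteq> me ` hE L"
  proof
    fix e assume e: "e \<in> set es"
    then have "qe e \<in> (qe \<circ> me) ` hE L" using sub by auto
    then obtain l where l: "l \<in> hE L" "qe e = qe (me l)" by auto
    have "e = me l" using inj_onD[OF qe_inj l(2)] e esS me_in[OF l(1)] by blast
    then show "e \<in> me ` hE L" using l(1) by blast
  qed
qed

end


context dtrans begin

lemma Inl_A[simp]: "Inl k \<in> A \<longleftrightarrow> k \<in> rI \<rho>" and Inr_A[simp]: "Inr k \<in> A \<longleftrightarrow> k \<in> rO \<rho>"
  by auto

definition Rel :: "(('v + 'a) \<times> ('v + 'a)) set" where
  "Rel = {(Inl (fR a), Inr (kv a)) | a. a \<in> A}"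

definition cls :: "'v + 'a \<Rightarrow> ('v + 'a) set" where
  "cls x = {y. (x, y) \<in> (Rel \<union> Rel\<inverse>)\<^sup>*}"

lemma cls_eq: "cls x = cls y \<longleftrightarrow> (x, y) \<in> (Rel \<union> Rel\<inverse>)\<^sup>*"
proof
  assume "cls x = cls y"
  moreover have "y \<in> cls y" unfolding cls_def by simp
  ultimately show "(x, y) \<in> (Rel \<union> Rel\<inverse>)\<^sup>*" unfolding cls_def by blast
next
  assume xy: "(x, y) \<in> (Rel \<union> Rel\<inverse>)\<^sup>*"
  show "cls x = cls y"
  proof (intro set_eqI iffI)
    fix z assume "z \<in> cls x"
    then have "(x, z) \<in> (Rel \<union> Rel\<inverse>)\<^sup>*" unfolding cls_def by simp
    then have "(y, z) \<in> (Rel \<union> Rel\<inverse>)\<^sup>*" using eqc_trans[OF eqc_sym[OF xy]] by blast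
    then show "z \<in> cls y" unfolding cls_def by simp
  next
    fix z assume "z \<in> cls y"
    then have "(y, z) \<in> (Rel \<union> Rel\<inverse>)\<^sup>*" unfolding cls_def by simp
    then have "(x, z) \<in> (Rel \<union> Rel\<inverse>)\<^sup>*" using eqc_trans[OF xy] by blast
    then show "z \<in> cls x" unfolding cls_def by simp
  qed
qed

lemma cls_self: "x \<in> cls x" unfolding cls_def by simp

lemma cls_step: "a \<in> A \<Longrightarrow> cls (Inl (fR a)) = cls (Inr (kv a))"
  unfolding cls_eq Rel_def by blast

lemma Eq_Inl_Inr: "cls (Inl r) = cls (Inr x) \<Longrightarrow> \<exists>a\<in>A. fR a = r \<and> kv a = x"
  using po_Inl_reach[OF kv_inj, of r "Inr x" fR] unfolding cls_eq Rel_def by auto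

lemma Eq_Inl_Inl: "cls (Inl r) = cls (Inl r') \<Longrightarrow> r = r'"
  using po_Inl_reach[OF kv_inj, of r "Inl r'" fR] unfolding cls_eq Rel_def by auto

lemma Eq_Inr_Inr:
  assumes "cls (Inr x1) = cls (Inr x2)" "x1 \<noteq> x2"
  shows "\<exists>a1\<in>A. \<exists>a2\<in>A. kv a1 = x1 \<and> kv a2 = x2 \<and> fR a1 = fR a2"
proof -
  have "(Inr x1, Inr x2) \<in> (Rel \<union> Rel\<inverse>)\<^sup>*" using assms(1) unfolding cls_eq .
  from po_Inr_gen[OF this[unfolded Rel_def]] assms(2) obtain a1 where
    a1: "a1 \<in> A" "kv a1 = x1" "(Inl (fR a1), Inr x2) \<in> (Rel \<union> Rel\<inverse>)\<^sup>*" unfolding Rel_def by auto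
  from po_Inl_reach[OF kv_inj a1(3)[unfolded Rel_def]] obtain a2 where "a2 \<in> A" "fR a2 = fR a1" "kv a2 = x2"
    by auto
  then show ?thesis using a1 by metis
qed

definition Tg :: "(('v + 'a) set, ('e + 'b) set, 'l) hg" where
  "Tg = \<lparr> hV = cls ` (hV R <+> hV Cg), hE = (\<lambda>x. {x}) ` (hE R <+> hE Cg),
     hsrc = \<lambda>E. case_sum (\<lambda>e. map (cls \<circ> Inl) (hsrc R e)) (\<lambda>c. map (cls \<circ> Inr) (hsrc Cg c)) (the_elem E),
     htgt = \<lambda>E. case_sum (\<lambda>e. map (cls \<circ> Inl) (htgt R e)) (\<lambda>c. map (cls \<circ> Inr) (htgt Cg c)) (the_elem E),
     hlab = \<lambda>E. case_sum (hlab R) (hlab Cg) (the_elem E) \<rparr>"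

lemma Tg_simps:
  "hV Tg = cls ` (hV R <+> hV Cg)" "hE Tg = (\<lambda>x. {x}) ` (hE R <+> hE Cg)"
  "hsrc Tg {Inl e} = map (cls \<circ> Inl) (hsrc R e)" "hsrc Tg {Inr c} = map (cls \<circ> Inr) (hsrc S c)"
  "htgt Tg {Inl e} = map (cls \<circ> Inl) (htgt R e)" "htgt Tg {Inr c} = map (cls \<circ> Inr) (htgt S c)"
  "hlab Tg {Inl e} = hlab R e" "hlab Tg {Inr c} = hlab S c"
  unfolding Tg_def by simp_all

lemma Tg_V: "t \<in> hV Tg \<longleftrightarrow> (\<exists>r\<in>hV R. t = cls (Inl r)) \<or> (\<exists>x\<in>hV Cg. t = cls (Inr x))"
  unfolding Tg_simps(1) Plus_def by blast

lemma Tg_V_Inl: "r \<in> hV R \<Longrightarrow> cls (Inl r) \<in> hV Tg" unfolding Tg_V by blast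
lemma Tg_V_Inr: "x \<in> hV Cg \<Longrightarrow> cls (Inr x) \<in> hV Tg" unfolding Tg_V by blast

lemma Tg_E: "E \<in> hE Tg \<longleftrightarrow> (\<exists>e\<in>hE R. E = {Inl e}) \<or> (\<exists>c\<in>hE Cg. E = {Inr c})"
  unfolding Tg_simps(2) Plus_def by blast

lemma hom_R_Tg: "hom R Tg (cls \<circ> Inl) (\<lambda>e. {Inl e})"
  unfolding hom_def Tg_V Tg_E Tg_simps by auto

lemma hom_C_Tg: "hom Cg Tg (cls \<circ> Inr) (\<lambda>c. {Inr c})"
  unfolding hom_def Tg_V Tg_E Tg_simps by auto

lemma po_R: "pushout_hg (discrete A :: ('k + 'k, 'e, 'l) hg) R Cg Tg fR (\<lambda>_. undefined) kv (\<lambda>_. undefined)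
   (cls \<circ> Inl) (\<lambda>e. {Inl e}) (cls \<circ> Inr) (\<lambda>c. {Inr c})"
proof -
  have d: "hV (discrete A :: ('k + 'k, 'e, 'l) hg) = A" "hE (discrete A :: ('k + 'k, 'e, 'l) hg) = {}"
    by (simp_all add: discrete_def)
  have h1: "hom (discrete A :: ('k + 'k, 'e, 'l) hg) R fR (\<lambda>_. undefined)"
    unfolding hom_discrete using fR_in by blast
  have h2: "hom (discrete A :: ('k + 'k, 'e, 'l) hg) Cg kv (\<lambda>_. undefined)"
    unfolding hom_discrete using kv_in_Cg by blast
  have cs: "\<And>x. case_sum (cls \<circ> Inl) (cls \<circ> Inr) x = cls x" by (case_tac x) auto
  have s1: "set_pushout A (hV R) (hV Cg) (hV Tg) fR kv (cls \<circ> Inl) (cls \<circ> Inr)"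
    unfolding set_pushout_def Let_def
  proof (intro conjI ballI)
    fix a assume "a \<in> A" then show "(cls \<circ> Inl) (fR a) = (cls \<circ> Inr) (kv a)" using cls_step by simp
  next
    show "(cls \<circ> Inl) ` hV R \<union> (cls \<circ> Inr) ` hV Cg = hV Tg"
      by (simp only: Tg_simps(1) Plus_def image_Un image_comp)
  next
    fix x y
    show "(case_sum (cls \<circ> Inl) (cls \<circ> Inr) x = case_sum (cls \<circ> Inl) (cls \<circ> Inr) y) =
      ((x, y) \<in> ({(Inl (fR a), Inr (kv a)) |a. a \<in> A} \<union> {(Inl (fR a), Inr (kv a)) |a. a \<in> A}\<inverse>)\<^sup>*)"
      unfolding cs cls_eq Rel_def ..
  qed
  have s2: "set_pushout ({}::'e set) (hE R) (hE Cg) (hE Tg) (\<lambda>_. undefined) (\<lambda>_. undefined) (\<lambda>e. {Inl e}) (\<lambda>c. {Inr c})"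
    by (rule set_pushout_intro) (auto simp: Tg_simps Plus_def inj_on_def)
  show ?thesis unfolding pushout_hg_def d using h1 h2 hom_R_Tg hom_C_Tg s1 s2 by blast
qed

lemma hyp_Tg_edge:
  assumes "E \<in> hE Tg"
  shows "set (hsrc Tg E) \<subseteq> hV Tg \<and> set (htgt Tg E) \<subseteq> hV Tg \<and> hlab Tg E \<in> sig \<and>
    hlab Tg E = (fst (hlab Tg E), length (hsrc Tg E), length (htgt Tg E))"
proof -
  from assms consider (R) e where "e \<in> hE R" "E = {Inl e}" | (C) c where "c \<in> hE Cg" "E = {Inr c}"
    unfolding Tg_E by blast
  then show ?thesis
  proof cases
    case R then show ?thesis using R_edge[OF R(1)] unfolding R(2) Tg_simps(3,5,7) by (auto intro: Tg_V_Inl)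
  next
    case C
    have "set (hsrc S c) \<subseteq> hV Cg" "set (htgt S c) \<subseteq> hV Cg" using dangling[OF C(1)] by auto
    moreover have "c \<in> hE S" using C by simp
    moreover have "\<And>x. x \<in> hV Cg \<Longrightarrow> cls (Inr x) \<in> hV Tg" by (rule Tg_V_Inr)
    ultimately show ?thesis using S_edge[of c] unfolding C(2) Tg_simps(4,6,8) by (auto simp del: Cg_simps)
  qed
qed

lemma finTg: "finite (hV Tg)" "finite (hE Tg)" unfolding Tg_simps using finR finS by auto

lemma hyp_Tg: "hyp sig Tg"
  unfolding hyp_def using finTg hyp_Tg_edge by blast

end


context dtrans begin

lemma psie_inj: "inj_on psie (hE Cg)"
proof (rule inj_onI)
  fix e1 e2 assume e: "e1 \<in> hE Cg" "e2 \<in> hE Cg" "psie e1 = psie e2"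
  have "qe e1 = qe e2" using psie[OF e(1)] psie[OF e(2)] e(3) by metis
  then show "e1 = e2" using inj_onD[OF qe_inj] e Cg_sub by blast
qed

lemma ma_Tg: "ma Tg"
proof -
  obtain kv' :: "'k + 'k \<Rightarrow> 'c" and T' :: "(('v + 'c) set, ('e + 'd) set, 'l) hg" and rv' re' hv' he'
    where h: "\<forall>a\<in>A. kv' a \<in> hV C'" "hom C' S' g'v g'e"
    "set_pushout A (hV L) (hV C') (hV S') fL kv' (q \<circ> mv) g'v"
    "set_pushout ({}::'e set) (hE L) (hE C') (hE S') (\<lambda>_. undefined) (\<lambda>_. undefined) (qe \<circ> me) g'e"
    "hyp sig C'" "convex_match L S' (q \<circ> mv) (qe \<circ> me)"
    "hom R T' rv' re'" "hom C' T' hv' he'" "\<forall>a\<in>A. rv' (fR a) = hv' (kv' a)"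
    "set_pushout ({}::'e set) (hE R) (hE C') (hE T') (\<lambda>_. undefined) (\<lambda>_. undefined) re' he'"
    "hyp sig T'" "ma T'"
    by (rule S'_all)
  define F where "F = case_sum rv' (hv' \<circ> psiv)"
  define ph where "ph t = F (SOME x. x \<in> t)" for t
  define phe where "phe E = case_sum re' (he' \<circ> psie) (the_elem E)" for E
  have Fstep: "F x = F y" if "(x, y) \<in> Rel" for x y
  proof -
    from that obtain a where a: "a \<in> A" "x = Inl (fR a)" "y = Inr (kv a)" unfolding Rel_def by blast
    have "psiv (kv a) = kv' a" by (rule psiv_kv[OF h(1) h(3) a(1)])
    then show ?thesis unfolding F_def a(2,3) using h(9) a(1) by simp
  qed
  have phcls: "ph (cls x) = F x" for x
  proof -
    have "(SOME y. y \<in> cls x) \<in> cls x" using cls_self by (rule someI)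
    then have "(x, SOME y. y \<in> cls x) \<in> (Rel \<union> Rel\<inverse>)\<^sup>*" unfolding cls_def by simp
    then have "F x = F (SOME y. y \<in> cls x)" by (rule eqc_fun) (rule Fstep)
    then show ?thesis unfolding ph_def by simp
  qed
  have rvin: "rv' r \<in> hV T'" if "r \<in> hV R" for r using h(7) that unfolding hom_def by blast
  have hvin: "hv' y \<in> hV T'" if "y \<in> hV C'" for y using h(8) that unfolding hom_def by blast
  have hom: "hom Tg T' ph phe"
    unfolding hom_def
  proof (rule conjI[OF ballI ballI])
    fix t assume "t \<in> hV Tg"
    then consider (R) r where "r \<in> hV R" "t = cls (Inl r)" | (C) x where "x \<in> hV Cg" "t = cls (Inr x)"
      unfolding Tg_V by blast
    then show "ph t \<in> hV T'"
    proof cases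
      case R then show ?thesis using phcls rvin unfolding F_def by simp
    next
      case C then show ?thesis using phcls hvin psiv unfolding F_def by simp
    qed
  next
    fix E assume "E \<in> hE Tg"
    then consider (R) e where "e \<in> hE R" "E = {Inl e}" | (C) c where "c \<in> hE Cg" "E = {Inr c}"
      unfolding Tg_E by blast
    then show "phe E \<in> hE T' \<and> hsrc T' (phe E) = map ph (hsrc Tg E) \<and>
        htgt T' (phe E) = map ph (htgt Tg E) \<and> hlab T' (phe E) = hlab Tg E"
    proof cases
      case R
      have "re' e \<in> hE T' \<and> hsrc T' (re' e) = map rv' (hsrc R e) \<and> htgt T' (re' e) = map rv' (htgt R e)
         \<and> hlab T' (re' e) = hlab R e" using h(7) R(1) unfolding hom_def by blast
      moreover have "phe E = re' e" unfolding phe_def R(2) by simp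
      moreover have "map ph (hsrc Tg E) = map rv' (hsrc R e)" "map ph (htgt Tg E) = map rv' (htgt R e)"
        unfolding R(2) Tg_simps by (simp_all add: phcls F_def)
      moreover have "hlab Tg E = hlab R e" unfolding R(2) Tg_simps by simp
      ultimately show ?thesis by simp
    next
      case C
      have pe: "psie c \<in> hE C'" using psie[OF C(1)] by blast
      have ph: "hsrc C' (psie c) = map psiv (hsrc Cg c)" "htgt C' (psie c) = map psiv (htgt Cg c)"
         "hlab C' (psie c) = hlab Cg c"
        using psi_hom C(1) unfolding hom_def by blast+
      have "he' (psie c) \<in> hE T' \<and> hsrc T' (he' (psie c)) = map hv' (hsrc C' (psie c)) \<and>
         htgt T' (he' (psie c)) = map hv' (htgt C' (psie c)) \<and> hlab T' (he' (psie c)) = hlab C' (psie c)"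
        using h(8) pe unfolding hom_def by blast
      moreover have "phe E = he' (psie c)" unfolding phe_def C(2) by simp
      moreover have "map ph (hsrc Tg E) = map hv' (hsrc C' (psie c))" "map ph (htgt Tg E) = map hv' (htgt C' (psie c))"
        unfolding C(2) Tg_simps ph by (simp_all add: phcls F_def)
      moreover have "hlab Tg E = hlab C' (psie c)" unfolding C(2) Tg_simps ph by simp
      ultimately show ?thesis by simp
    qed
  qed
  have inj: "inj_on phe (hE Tg)"
  proof (rule inj_onI)
    fix E1 E2 assume E: "E1 \<in> hE Tg" "E2 \<in> hE Tg" "phe E1 = phe E2"
    note p = set_pushout_empty[OF h(10)]
    from E(1) consider (R1) e1 where "e1 \<in> hE R" "E1 = {Inl e1}" | (C1) c1 where "c1 \<in> hE Cg" "E1 = {Inr c1}"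
      unfolding Tg_E by blast
    then show "E1 = E2"
    proof cases
      case R1
      from E(2) consider (R2) e2 where "e2 \<in> hE R" "E2 = {Inl e2}" | (C2) c2 where "c2 \<in> hE Cg" "E2 = {Inr c2}"
        unfolding Tg_E by blast
      then show ?thesis
      proof cases
        case R2
        have "re' e1 = re' e2" using E(3) unfolding R1(2) R2(2) phe_def by simp
        then show ?thesis using inj_onD[OF p(1)] R1 R2 by blast
      next
        case C2
        have "re' e1 = he' (psie c2)" using E(3) unfolding R1(2) C2(2) phe_def by simp
        then show ?thesis using p(3)[OF R1(1)] psie[OF C2(1)] by blast
      qed
    next
      case C1
      from E(2) consider (R2) e2 where "e2 \<in> hE R" "E2 = {Inl e2}" | (C2) c2 where "c2 \<in> hE Cg" "E2 = {Inr c2}"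
        unfolding Tg_E by blast
      then show ?thesis
      proof cases
        case R2
        have "re' e2 = he' (psie c1)" using E(3) unfolding R2(2) C1(2) phe_def by simp
        then show ?thesis using p(3)[OF R2(1)] psie[OF C1(1)] by blast
      next
        case C2
        have "he' (psie c1) = he' (psie c2)" using E(3) unfolding C1(2) C2(2) phe_def by simp
        then have "psie c1 = psie c2" using inj_onD[OF p(2)] psie[OF C1(1)] psie[OF C2(1)] by blast
        then have "c1 = c2" using inj_onD[OF psie_inj] C1(1) C2(1) by blast
        then show ?thesis using C1 C2 by simp
      qed
    qed
  qed
  have "finite (hE T')" using h(11) unfolding hyp_def by blast
  then show ?thesis using ma_from_hom[OF hom inj _ h(12)] by blast
qed

end


context dtrans begin

definition tT :: "('v + 'a) set \<Rightarrow> bool" where "tT t \<longleftrightarrow> (\<exists>E\<in>hE Tg. t \<in> set (htgt Tg E))"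

lemma inn_Tg_iff: "t \<in> inn Tg \<longleftrightarrow> t \<in> hV Tg \<and> \<not> tT t"
  unfolding inn_def tT_def using indeg_zero_iff[OF finTg(2)] by blast

lemma inn_S_iff: "x \<in> inn S \<longleftrightarrow> x \<in> hV S \<and> (\<forall>e\<in>hE S. x \<notin> set (htgt S e))"
  unfolding inn_def using indeg_zero_iff[OF finS(1)] by blast

lemma inn_L_iff: "x \<in> inn L \<longleftrightarrow> x \<in> hV L \<and> (\<forall>e\<in>hE L. x \<notin> set (htgt L e))"
  unfolding inn_def using indeg_zero_iff[OF finL(1)] by blast

lemma inn_R_iff: "x \<in> inn R \<longleftrightarrow> x \<in> hV R \<and> (\<forall>e\<in>hE R. x \<notin> set (htgt R e))"
  unfolding inn_def using indeg_zero_iff[OF finR(1)] by blast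

lemma tT_R: "e \<in> hE R \<Longrightarrow> r \<in> set (htgt R e) \<Longrightarrow> tT (cls (Inl r))"
proof -
  assume a: "e \<in> hE R" "r \<in> set (htgt R e)"
  have "{Inl e} \<in> hE Tg" unfolding Tg_E using a(1) by blast
  moreover have "cls (Inl r) \<in> set (htgt Tg {Inl e})" unfolding Tg_simps using a(2) by simp
  ultimately show ?thesis unfolding tT_def by blast
qed

lemma tT_C: "c \<in> hE Cg \<Longrightarrow> y \<in> set (htgt S c) \<Longrightarrow> tT (cls (Inr y))"
proof -
  assume a: "c \<in> hE Cg" "y \<in> set (htgt S c)"
  have "{Inr c} \<in> hE Tg" unfolding Tg_E using a(1) by blast
  moreover have "cls (Inr y) \<in> set (htgt Tg {Inr c})" unfolding Tg_simps using a(2) by simp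
  ultimately show ?thesis unfolding tT_def by blast
qed

lemma tT_cases:
  assumes "tT t"
  obtains (R) e r where "e \<in> hE R" "r \<in> set (htgt R e)" "t = cls (Inl r)"
    | (C) c y where "c \<in> hE Cg" "y \<in> set (htgt S c)" "t = cls (Inr y)"
proof -
  from assms obtain E where E: "E \<in> hE Tg" "t \<in> set (htgt Tg E)" unfolding tT_def by blast
  from E(1) consider (R) e where "e \<in> hE R" "E = {Inl e}" | (C) c where "c \<in> hE Cg" "E = {Inr c}"
    unfolding Tg_E by blast
  then show ?thesis
  proof cases
    case R then show ?thesis using that(1)[of e] E(2) unfolding R(2) Tg_simps by auto
  next
    case C then show ?thesis using that(2)[of c] E(2) unfolding C(2) Tg_simps by auto
  qed
qed

lemma inn_in_Cg: "x \<in> inn S \<Longrightarrow> x \<in> hV Cg"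
proof -
  assume x: "x \<in> inn S"
  have xS: "x \<in> hV S" using x unfolding inn_def by blast
  show "x \<in> hV Cg"
  proof (cases "x \<in> mv ` hV L")
    case True
    then obtain v where v: "v \<in> hV L" "x = mv v" by blast
    then have "v \<in> inn L" using m_inn[OF v(1)] x by simp
    then have "v \<in> fL ` A" unfolding fL_A by blast
    then show ?thesis using xS v(2) unfolding Cg_simps by blast
  next
    case False then show ?thesis using xS unfolding Cg_simps by blast
  qed
qed

lemma roL_tgt: "k' \<in> rO \<rho> \<Longrightarrow> \<exists>l\<in>hE L. roL \<rho> k' \<in> set (htgt L l)"
proof -
  assume k: "k' \<in> rO \<rho>"
  have "roL \<rho> k' \<in> hV L" using fL_in[of "Inr k'"] k by simp
  then show ?thesis using roL_not_in[OF k] unfolding inn_L_iff by blast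
qed

lemma two_tgt:
  assumes "c \<in> hE Cg" "l \<in> hE L" "y \<in> set (htgt S c)" "y \<in> set (htgt S (me l))"
  shows False
proof -
  obtain i where i: "i < length (htgt S c)" "htgt S c ! i = y" using assms(3) by (auto simp: in_set_conv_nth)
  obtain j where j: "j < length (htgt S (me l))" "htgt S (me l) ! j = y" using assms(4) by (auto simp: in_set_conv_nth)
  have c: "c \<in> hE S" "c \<noteq> me l" using assms(1,2) by auto
  have "indeg S y \<ge> 2" by (rule indeg_two[OF finS(1) c(1) me_in[OF assms(2)] i(1) j(1) i(2) j(2)]) (use c in auto)
  moreover have "y \<in> hV S" using S_edge[OF c(1)] assms(3) by blast
  ultimately show False using maS unfolding ma_def by fastforce
qed

lemma inn_to_T: "x \<in> inn S \<Longrightarrow> cls (Inr x) \<in> inn Tg"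
proof -
  assume x: "x \<in> inn S"
  have xC: "x \<in> hV Cg" by (rule inn_in_Cg[OF x])
  have "\<not> tT (cls (Inr x))"
  proof
    assume "tT (cls (Inr x))"
    then show False
    proof (cases rule: tT_cases)
      case (R e r)
      then obtain a where a: "a \<in> A" "fR a = r" "kv a = x" using Eq_Inl_Inr by metis
      then obtain k where k: "k \<in> rI \<rho>" "a = Inl k" using kv_inn x by blast
      have "r \<in> inn R" using a(2) k rule_facts(12) by auto
      then show False using R(1,2) unfolding inn_R_iff by blast
    next
      case (C c y)
      show False
      proof (cases "x = y")
        case True
        then show False using C(1,2) x unfolding inn_S_iff by auto
      next
        case False
        from Eq_Inr_Inr[OF C(3) False] obtain a1 a2 where a: "a1 \<in> A" "a2 \<in> A" "kv a1 = x" "kv a2 = y"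
          "fR a1 = fR a2" by blast
        then obtain k where k: "k \<in> rI \<rho>" "a1 = Inl k" using kv_inn x by blast
        show False
        proof (cases a2)
          case (Inl k2)
          then have "riR \<rho> k = riR \<rho> k2" "k2 \<in> rI \<rho>" using a(2,5) k by auto
          then have "k = k2" using inj_onD[OF rule_facts(11)] k(1) by blast
          then show False using a k Inl False by simp
        next
          case (Inr k')
          then have k': "k' \<in> rO \<rho>" "y = mv (roL \<rho> k')" using a(2,4) unfolding kv_def by auto
          obtain l where l: "l \<in> hE L" "roL \<rho> k' \<in> set (htgt L l)" using roL_tgt[OF k'(1)] by blast
          have "y \<in> set (htgt S (me l))" using me_props[OF l(1)] l(2) k'(2) by simp
          then show False using two_tgt[OF C(1) l(1) C(2)] by blast
        qed
      qed
    qed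
  qed
  then show ?thesis unfolding inn_Tg_iff using Tg_V_Inr[OF xC] by blast
qed

lemma B2_inn:
  assumes k: "k \<in> rI \<rho>" and n: "\<not> tT (cls (Inr (mv (riL \<rho> k))))"
  shows "mv (riL \<rho> k) \<in> inn S"
proof (rule ccontr)
  assume a: "mv (riL \<rho> k) \<notin> inn S"
  have kL: "riL \<rho> k \<in> hV L" using fL_in[of "Inl k"] k by simp
  have kin: "riL \<rho> k \<in> inn L" using k rule_facts(8) by blast
  have "mv (riL \<rho> k) \<in> hV S" by (rule m_in[OF kL])
  then obtain e where e: "e \<in> hE S" "mv (riL \<rho> k) \<in> set (htgt S e)" using a unfolding inn_S_iff by blast
  show False
  proof (cases "e \<in> me ` hE L")
    case True
    then obtain l where l: "l \<in> hE L" "e = me l" by blast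
    then have "mv (riL \<rho> k) \<in> set (map mv (htgt L l))" using e(2) me_props[OF l(1)] by simp
    then obtain u where u: "u \<in> set (htgt L l)" "mv u = mv (riL \<rho> k)" by auto
    have "u \<in> hV L" using u(1) L_edge[OF l(1)] by blast
    then have "u = riL \<rho> k" using inj_onD[OF minj u(2) _ kL] by blast
    then show False using kin l(1) u(1) unfolding inn_L_iff by blast
  next
    case False
    then have "e \<in> hE Cg" using e(1) by simp
    then show False using tT_C[OF _ e(2)] n by blast
  qed
qed

lemma B1_inn:
  assumes x: "x \<in> hV Cg" and nx: "x \<notin> inn S" and n: "\<not> tT (cls (Inr x))"
  shows "\<exists>k\<in>rI \<rho>. cls (Inr x) = cls (Inr (mv (riL \<rho> k)))"
proof -
  have xS: "x \<in> hV S" using x by simp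
  then obtain e where e: "e \<in> hE S" "x \<in> set (htgt S e)" using nx unfolding inn_S_iff by blast
  have "e \<in> me ` hE L"
  proof (rule ccontr)
    assume "e \<notin> me ` hE L"
    then have "e \<in> hE Cg" using e(1) by simp
    then show False using tT_C[OF _ e(2)] n by blast
  qed
  then obtain l where l: "l \<in> hE L" "e = me l" by blast
  then have "x \<in> set (map mv (htgt L l))" using e(2) me_props[OF l(1)] by simp
  then obtain u where u: "u \<in> set (htgt L l)" "x = mv u" by auto
  have uL: "u \<in> hV L" using u(1) L_edge[OF l(1)] by blast
  have "x \<in> mv ` hV L" using u(2) uL by blast
  from Cg_L[OF x this] obtain a where a: "a \<in> A" "x = kv a" by blast
  have "mv (fL a) = mv u" using a(2) u(2) unfolding kv_def by simp
  then have fa: "fL a = u" using inj_onD[OF minj _ fL_in[OF a(1)] uL] by blast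
  have unot: "u \<notin> inn L" using u(1) l(1) unfolding inn_L_iff by blast
  show ?thesis
  proof (cases a)
    case (Inl k)
    then have "u \<in> inn L" using fa a(1) rule_facts(8) by auto
    then show ?thesis using unot by blast
  next
    case (Inr k')
    have k': "k' \<in> rO \<rho>" using a(1) Inr by auto
    have c1: "cls (Inr x) = cls (Inl (roR \<rho> k'))" using cls_step[OF a(1)] a(2) Inr by simp
    have rR: "roR \<rho> k' \<in> hV R" using fR_in[OF a(1)] Inr by simp
    have "roR \<rho> k' \<in> inn R"
    proof (rule ccontr)
      assume "roR \<rho> k' \<notin> inn R"
      then obtain e' where "e' \<in> hE R" "roR \<rho> k' \<in> set (htgt R e')" using rR unfolding inn_R_iff by blast
      then have "tT (cls (Inl (roR \<rho> k')))" by (rule tT_R)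
      then show False using n c1 by simp
    qed
    then obtain k where k: "k \<in> rI \<rho>" "roR \<rho> k' = riR \<rho> k" using rule_facts(12) by force
    have "cls (Inl (riR \<rho> k)) = cls (Inr (kv (Inl k)))" using cls_step[of "Inl k"] k(1) by simp
    then have "cls (Inr x) = cls (Inr (mv (riL \<rho> k)))" using c1 k(2) unfolding kv_def by simp
    then show ?thesis using k(1) by blast
  qed
qed

lemma inn_from_T:
  assumes t: "t \<in> inn Tg"
  shows "t \<in> (cls \<circ> Inr) ` inn S"
proof -
  have tV: "t \<in> hV Tg" and n: "\<not> tT t" using t unfolding inn_Tg_iff by blast+
  have fin: "t \<in> (cls \<circ> Inr) ` inn S" if k: "k \<in> rI \<rho>" "t = cls (Inr (mv (riL \<rho> k)))" for k
  proof -
    have "mv (riL \<rho> k) \<in> inn S" using B2_inn[OF k(1)] n k(2) by blast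
    then show ?thesis using k(2) by auto
  qed
  from tV consider (R) r where "r \<in> hV R" "t = cls (Inl r)" | (C) x where "x \<in> hV Cg" "t = cls (Inr x)"
    unfolding Tg_V by blast
  then show ?thesis
  proof cases
    case R
    have "r \<in> inn R"
    proof (rule ccontr)
      assume "r \<notin> inn R"
      then obtain e' where "e' \<in> hE R" "r \<in> set (htgt R e')" using R(1) unfolding inn_R_iff by blast
      then have "tT (cls (Inl r))" by (rule tT_R)
      then show False using n R(2) by simp
    qed
    then obtain k where k: "k \<in> rI \<rho>" "r = riR \<rho> k" using rule_facts(12) by force
    have "cls (Inl (riR \<rho> k)) = cls (Inr (kv (Inl k)))" using cls_step[of "Inl k"] k(1) by simp
    then have "t = cls (Inr (mv (riL \<rho> k)))" using R(2) k(2) unfolding kv_def by simp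
    then show ?thesis using fin k(1) by blast
  next
    case C
    show ?thesis
    proof (cases "x \<in> inn S")
      case True then show ?thesis using C(2) by auto
    next
      case False
      from B1_inn[OF C(1) False] n C(2) obtain k where "k \<in> rI \<rho>" "t = cls (Inr (mv (riL \<rho> k)))" by auto
      then show ?thesis using fin by blast
    qed
  qed
qed

lemma inn_inj: "inj_on (cls \<circ> Inr) (inn S)"
proof (rule inj_onI)
  fix x1 x2 assume x: "x1 \<in> inn S" "x2 \<in> inn S" "(cls \<circ> Inr) x1 = (cls \<circ> Inr) x2"
  show "x1 = x2"
  proof (rule ccontr)
    assume ne: "x1 \<noteq> x2"
    from Eq_Inr_Inr[OF _ ne] x(3) obtain a1 a2 where a: "a1 \<in> A" "a2 \<in> A" "kv a1 = x1" "kv a2 = x2"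
      "fR a1 = fR a2" by auto
    obtain k1 where k1: "k1 \<in> rI \<rho>" "a1 = Inl k1" using kv_inn a(1,3) x(1) by blast
    obtain k2 where k2: "k2 \<in> rI \<rho>" "a2 = Inl k2" using kv_inn a(2,4) x(2) by blast
    have "riR \<rho> k1 = riR \<rho> k2" using a(5) k1 k2 by simp
    then have "k1 = k2" using inj_onD[OF rule_facts(11)] k1(1) k2(1) by blast
    then show False using a k1 k2 ne by simp
  qed
qed

lemma inn_Tg: "inn Tg = (cls \<circ> Inr) ` inn S"
  using inn_from_T inn_to_T by auto

definition sT :: "('v + 'a) set \<Rightarrow> bool" where "sT t \<longleftrightarrow> (\<exists>E\<in>hE Tg. t \<in> set (hsrc Tg E))"

lemma outn_Tg_iff: "t \<in> outn Tg \<longleftrightarrow> t \<in> hV Tg \<and> \<not> sT t"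
  unfolding outn_def sT_def using outdeg_zero_iff[OF finTg(2)] by blast

lemma outn_S_iff: "x \<in> outn S \<longleftrightarrow> x \<in> hV S \<and> (\<forall>e\<in>hE S. x \<notin> set (hsrc S e))"
  unfolding outn_def using outdeg_zero_iff[OF finS(1)] by blast

lemma outn_L_iff: "x \<in> outn L \<longleftrightarrow> x \<in> hV L \<and> (\<forall>e\<in>hE L. x \<notin> set (hsrc L e))"
  unfolding outn_def using outdeg_zero_iff[OF finL(1)] by blast

lemma outn_R_iff: "x \<in> outn R \<longleftrightarrow> x \<in> hV R \<and> (\<forall>e\<in>hE R. x \<notin> set (hsrc R e))"
  unfolding outn_def using outdeg_zero_iff[OF finR(1)] by blast

lemma sT_R: "e \<in> hE R \<Longrightarrow> r \<in> set (hsrc R e) \<Longrightarrow> sT (cls (Inl r))"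
proof -
  assume a: "e \<in> hE R" "r \<in> set (hsrc R e)"
  have "{Inl e} \<in> hE Tg" unfolding Tg_E using a(1) by blast
  moreover have "cls (Inl r) \<in> set (hsrc Tg {Inl e})" unfolding Tg_simps using a(2) by simp
  ultimately show ?thesis unfolding sT_def by blast
qed

lemma sT_C: "c \<in> hE Cg \<Longrightarrow> y \<in> set (hsrc S c) \<Longrightarrow> sT (cls (Inr y))"
proof -
  assume a: "c \<in> hE Cg" "y \<in> set (hsrc S c)"
  have "{Inr c} \<in> hE Tg" unfolding Tg_E using a(1) by blast
  moreover have "cls (Inr y) \<in> set (hsrc Tg {Inr c})" unfolding Tg_simps using a(2) by simp
  ultimately show ?thesis unfolding sT_def by blast
qed

lemma sT_cases:
  assumes "sT t"
  obtains (R) e r where "e \<in> hE R" "r \<in> set (hsrc R e)" "t = cls (Inl r)"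
    | (C) c y where "c \<in> hE Cg" "y \<in> set (hsrc S c)" "t = cls (Inr y)"
proof -
  from assms obtain E where E: "E \<in> hE Tg" "t \<in> set (hsrc Tg E)" unfolding sT_def by blast
  from E(1) consider (R) e where "e \<in> hE R" "E = {Inl e}" | (C) c where "c \<in> hE Cg" "E = {Inr c}"
    unfolding Tg_E by blast
  then show ?thesis
  proof cases
    case R then show ?thesis using that(1)[of e] E(2) unfolding R(2) Tg_simps by auto
  next
    case C then show ?thesis using that(2)[of c] E(2) unfolding C(2) Tg_simps by auto
  qed
qed

lemma outn_in_Cg: "x \<in> outn S \<Longrightarrow> x \<in> hV Cg"
proof -
  assume x: "x \<in> outn S"
  have xS: "x \<in> hV S" using x unfolding outn_def by blast
  show "x \<in> hV Cg"
  proof (cases "x \<in> mv ` hV L")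
    case True
    then obtain v where v: "v \<in> hV L" "x = mv v" by blast
    then have "v \<in> outn L" using m_outn[OF v(1)] x by simp
    then have "v \<in> fL ` A" unfolding fL_A by blast
    then show ?thesis using xS v(2) unfolding Cg_simps by blast
  next
    case False then show ?thesis using xS unfolding Cg_simps by blast
  qed
qed

lemma riL_src: "k' \<in> rI \<rho> \<Longrightarrow> \<exists>l\<in>hE L. riL \<rho> k' \<in> set (hsrc L l)"
proof -
  assume k: "k' \<in> rI \<rho>"
  have "riL \<rho> k' \<in> hV L" using fL_in[of "Inl k'"] k by simp
  then show ?thesis using riL_not_out[OF k] unfolding outn_L_iff by blast
qed

lemma two_src:
  assumes "c \<in> hE Cg" "l \<in> hE L" "y \<in> set (hsrc S c)" "y \<in> set (hsrc S (me l))"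
  shows False
proof -
  obtain i where i: "i < length (hsrc S c)" "hsrc S c ! i = y" using assms(3) by (auto simp: in_set_conv_nth)
  obtain j where j: "j < length (hsrc S (me l))" "hsrc S (me l) ! j = y" using assms(4) by (auto simp: in_set_conv_nth)
  have c: "c \<in> hE S" "c \<noteq> me l" using assms(1,2) by auto
  have "outdeg S y \<ge> 2" by (rule outdeg_two[OF finS(1) c(1) me_in[OF assms(2)] i(1) j(1) i(2) j(2)]) (use c in auto)
  moreover have "y \<in> hV S" using S_edge[OF c(1)] assms(3) by blast
  ultimately show False using maS unfolding ma_def by fastforce
qed

lemma outn_to_T: "x \<in> outn S \<Longrightarrow> cls (Inr x) \<in> outn Tg"
proof -
  assume x: "x \<in> outn S"
  have xC: "x \<in> hV Cg" by (rule outn_in_Cg[OF x])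
  have "\<not> sT (cls (Inr x))"
  proof
    assume "sT (cls (Inr x))"
    then show False
    proof (cases rule: sT_cases)
      case (R e r)
      then obtain a where a: "a \<in> A" "fR a = r" "kv a = x" using Eq_Inl_Inr by metis
      then obtain k where k: "k \<in> rO \<rho>" "a = Inr k" using kv_outn x by blast
      have "r \<in> outn R" using a(2) k rule_facts(14) by auto
      then show False using R(1,2) unfolding outn_R_iff by blast
    next
      case (C c y)
      show False
      proof (cases "x = y")
        case True
        then show False using C(1,2) x unfolding outn_S_iff by auto
      next
        case False
        from Eq_Inr_Inr[OF C(3) False] obtain a1 a2 where a: "a1 \<in> A" "a2 \<in> A" "kv a1 = x" "kv a2 = y"
          "fR a1 = fR a2" by blast
        then obtain k where k: "k \<in> rO \<rho>" "a1 = Inr k" using kv_outn x by blast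
        show False
        proof (cases a2)
          case (Inr k2)
          then have "roR \<rho> k = roR \<rho> k2" "k2 \<in> rO \<rho>" using a(2,5) k by auto
          then have "k = k2" using inj_onD[OF rule_facts(13)] k(1) by blast
          then show False using a k Inr False by simp
        next
          case (Inl k')
          then have k': "k' \<in> rI \<rho>" "y = mv (riL \<rho> k')" using a(2,4) unfolding kv_def by auto
          obtain l where l: "l \<in> hE L" "riL \<rho> k' \<in> set (hsrc L l)" using riL_src[OF k'(1)] by blast
          have "y \<in> set (hsrc S (me l))" using me_props[OF l(1)] l(2) k'(2) by simp
          then show False using two_src[OF C(1) l(1) C(2)] by blast
        qed
      qed
    qed
  qed
  then show ?thesis unfolding outn_Tg_iff using Tg_V_Inr[OF xC] by blast
qed

lemma B2_outn:
  assumes k: "k \<in> rO \<rho>" and n: "\<not> sT (cls (Inr (mv (roL \<rho> k))))"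
  shows "mv (roL \<rho> k) \<in> outn S"
proof (rule ccontr)
  assume a: "mv (roL \<rho> k) \<notin> outn S"
  have kL: "roL \<rho> k \<in> hV L" using fL_in[of "Inr k"] k by simp
  have kin: "roL \<rho> k \<in> outn L" using k rule_facts(10) by blast
  have "mv (roL \<rho> k) \<in> hV S" by (rule m_in[OF kL])
  then obtain e where e: "e \<in> hE S" "mv (roL \<rho> k) \<in> set (hsrc S e)" using a unfolding outn_S_iff by blast
  show False
  proof (cases "e \<in> me ` hE L")
    case True
    then obtain l where l: "l \<in> hE L" "e = me l" by blast
    then have "mv (roL \<rho> k) \<in> set (map mv (hsrc L l))" using e(2) me_props[OF l(1)] by simp
    then obtain u where u: "u \<in> set (hsrc L l)" "mv u = mv (roL \<rho> k)" by auto
    have "u \<in> hV L" using u(1) L_edge[OF l(1)] by blast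
    then have "u = roL \<rho> k" using inj_onD[OF minj u(2) _ kL] by blast
    then show False using kin l(1) u(1) unfolding outn_L_iff by blast
  next
    case False
    then have "e \<in> hE Cg" using e(1) by simp
    then show False using sT_C[OF _ e(2)] n by blast
  qed
qed

lemma B1_outn:
  assumes x: "x \<in> hV Cg" and nx: "x \<notin> outn S" and n: "\<not> sT (cls (Inr x))"
  shows "\<exists>k\<in>rO \<rho>. cls (Inr x) = cls (Inr (mv (roL \<rho> k)))"
proof -
  have xS: "x \<in> hV S" using x by simp
  then obtain e where e: "e \<in> hE S" "x \<in> set (hsrc S e)" using nx unfolding outn_S_iff by blast
  have "e \<in> me ` hE L"
  proof (rule ccontr)
    assume "e \<notin> me ` hE L"
    then have "e \<in> hE Cg" using e(1) by simp
    then show False using sT_C[OF _ e(2)] n by blast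
  qed
  then obtain l where l: "l \<in> hE L" "e = me l" by blast
  then have "x \<in> set (map mv (hsrc L l))" using e(2) me_props[OF l(1)] by simp
  then obtain u where u: "u \<in> set (hsrc L l)" "x = mv u" by auto
  have uL: "u \<in> hV L" using u(1) L_edge[OF l(1)] by blast
  have "x \<in> mv ` hV L" using u(2) uL by blast
  from Cg_L[OF x this] obtain a where a: "a \<in> A" "x = kv a" by blast
  have "mv (fL a) = mv u" using a(2) u(2) unfolding kv_def by simp
  then have fa: "fL a = u" using inj_onD[OF minj _ fL_in[OF a(1)] uL] by blast
  have unot: "u \<notin> outn L" using u(1) l(1) unfolding outn_L_iff by blast
  show ?thesis
  proof (cases a)
    case (Inr k)
    then have "u \<in> outn L" using fa a(1) rule_facts(10) by auto
    then show ?thesis using unot by blast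
  next
    case (Inl k')
    have k': "k' \<in> rI \<rho>" using a(1) Inl by auto
    have c1: "cls (Inr x) = cls (Inl (riR \<rho> k'))" using cls_step[OF a(1)] a(2) Inl by simp
    have rR: "riR \<rho> k' \<in> hV R" using fR_in[OF a(1)] Inl by simp
    have "riR \<rho> k' \<in> outn R"
    proof (rule ccontr)
      assume "riR \<rho> k' \<notin> outn R"
      then obtain e' where "e' \<in> hE R" "riR \<rho> k' \<in> set (hsrc R e')" using rR unfolding outn_R_iff by blast
      then have "sT (cls (Inl (riR \<rho> k')))" by (rule sT_R)
      then show False using n c1 by simp
    qed
    then obtain k where k: "k \<in> rO \<rho>" "riR \<rho> k' = roR \<rho> k" using rule_facts(14) by force
    have "cls (Inl (roR \<rho> k)) = cls (Inr (kv (Inr k)))" using cls_step[of "Inr k"] k(1) by simp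
    then have "cls (Inr x) = cls (Inr (mv (roL \<rho> k)))" using c1 k(2) unfolding kv_def by simp
    then show ?thesis using k(1) by blast
  qed
qed

lemma outn_from_T:
  assumes t: "t \<in> outn Tg"
  shows "t \<in> (cls \<circ> Inr) ` outn S"
proof -
  have tV: "t \<in> hV Tg" and n: "\<not> sT t" using t unfolding outn_Tg_iff by blast+
  have fin: "t \<in> (cls \<circ> Inr) ` outn S" if k: "k \<in> rO \<rho>" "t = cls (Inr (mv (roL \<rho> k)))" for k
  proof -
    have "mv (roL \<rho> k) \<in> outn S" using B2_outn[OF k(1)] n k(2) by blast
    then show ?thesis using k(2) by auto
  qed
  from tV consider (R) r where "r \<in> hV R" "t = cls (Inl r)" | (C) x where "x \<in> hV Cg" "t = cls (Inr x)"
    unfolding Tg_V by blast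
  then show ?thesis
  proof cases
    case R
    have "r \<in> outn R"
    proof (rule ccontr)
      assume "r \<notin> outn R"
      then obtain e' where "e' \<in> hE R" "r \<in> set (hsrc R e')" using R(1) unfolding outn_R_iff by blast
      then have "sT (cls (Inl r))" by (rule sT_R)
      then show False using n R(2) by simp
    qed
    then obtain k where k: "k \<in> rO \<rho>" "r = roR \<rho> k" using rule_facts(14) by force
    have "cls (Inl (roR \<rho> k)) = cls (Inr (kv (Inr k)))" using cls_step[of "Inr k"] k(1) by simp
    then have "t = cls (Inr (mv (roL \<rho> k)))" using R(2) k(2) unfolding kv_def by simp
    then show ?thesis using fin k(1) by blast
  next
    case C
    show ?thesis
    proof (cases "x \<in> outn S")
      case True then show ?thesis using C(2) by auto
    next
      case False
      from B1_outn[OF C(1) False] n C(2) obtain k where "k \<in> rO \<rho>" "t = cls (Inr (mv (roL \<rho> k)))" by auto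
      then show ?thesis using fin by blast
    qed
  qed
qed

lemma outn_inj: "inj_on (cls \<circ> Inr) (outn S)"
proof (rule inj_onI)
  fix x1 x2 assume x: "x1 \<in> outn S" "x2 \<in> outn S" "(cls \<circ> Inr) x1 = (cls \<circ> Inr) x2"
  show "x1 = x2"
  proof (rule ccontr)
    assume ne: "x1 \<noteq> x2"
    from Eq_Inr_Inr[OF _ ne] x(3) obtain a1 a2 where a: "a1 \<in> A" "a2 \<in> A" "kv a1 = x1" "kv a2 = x2"
      "fR a1 = fR a2" by auto
    obtain k1 where k1: "k1 \<in> rO \<rho>" "a1 = Inr k1" using kv_outn a(1,3) x(1) by blast
    obtain k2 where k2: "k2 \<in> rO \<rho>" "a2 = Inr k2" using kv_outn a(2,4) x(2) by blast
    have "roR \<rho> k1 = roR \<rho> k2" using a(5) k1 k2 by simp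
    then have "k1 = k2" using inj_onD[OF rule_facts(13)] k1(1) k2(1) by blast
    then show False using a k1 k2 ne by simp
  qed
qed

lemma outn_Tg: "outn Tg = (cls \<circ> Inr) ` outn S"
  using outn_from_T outn_to_T by auto

end


context dtrans begin

lemma deriv_S: "deriv sig \<rho> S mv me Cg id id"
proof -
  have mc: "ma_cospan (inn S) (outn S) Tg ((cls \<circ> Inr) \<circ> id) ((cls \<circ> Inr) \<circ> id)"
    unfolding ma_cospan_def using ma_Tg inn_inj outn_inj inn_Tg outn_Tg by simp
  have io: "\<forall>x\<in>inn S. id x \<in> hV Cg \<and> id (id x) = x" "\<forall>x\<in>outn S. id x \<in> hV Cg \<and> id (id x) = x"
    using inn_in_Cg outn_in_Cg by auto
  show ?thesis unfolding deriv_def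
    using hS maS convex hyp_Cg po_L po_R hyp_Tg io mc by blast
qed

lemma transfer:
  "\<exists>C :: ('a, 'b, 'l) hg. deriv sig \<rho> S mv me C id id \<and>
     (\<exists>pv pe. hom C C' pv pe \<and> (\<forall>x\<in>hV C. g'v (pv x) = q x) \<and> (\<forall>e\<in>hE C. g'e (pe e) = qe e))"
proof (intro exI conjI)
  show "deriv sig \<rho> S mv me Cg id id" by (rule deriv_S)
  show "hom Cg C' psiv psie" by (rule psi_hom)
  show "\<forall>x\<in>hV Cg. g'v (psiv x) = q x" using psiv by blast
  show "\<forall>e\<in>hE Cg. g'e (psie e) = qe e" using psie by blast
qed

end


lemma fac_transfer:
  assumes "factors_through L C mv me id id" "hom C C' pv pe" "\<forall>x\<in>hV C. g'v (pv x) = q x"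
    "\<forall>e\<in>hE C. g'e (pe e) = qe e"
  shows "factors_through L C' (q \<circ> mv) (qe \<circ> me) g'v g'e"
proof -
  from assms(1) obtain hv he where h: "hom L C hv he" "\<forall>v\<in>hV L. hv v = mv v" "\<forall>e\<in>hE L. he e = me e"
    unfolding factors_through_def by auto
  have "hom L C' (pv \<circ> hv) (pe \<circ> he)" by (rule hom_comp[OF h(1) assms(2)])
  moreover have "\<forall>v\<in>hV L. g'v ((pv \<circ> hv) v) = (q \<circ> mv) v"
  proof
    fix v assume v: "v \<in> hV L"
    then have "hv v \<in> hV C" using h(1) unfolding hom_def by blast
    then show "g'v ((pv \<circ> hv) v) = (q \<circ> mv) v" using assms(3) h(2) v by simp
  qed
  moreover have "\<forall>e\<in>hE L. g'e ((pe \<circ> he) e) = (qe \<circ> me) e"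
  proof
    fix e assume e: "e \<in> hE L"
    then have "he e \<in> hE C" using h(1) unfolding hom_def by blast
    then show "g'e ((pe \<circ> he) e) = (qe \<circ> me) e" using assms(4) h(3) e by simp
  qed
  ultimately show ?thesis unfolding factors_through_def by blast
qed

lemma hom_Inl: "hom G (hg_sum G H) Inl Inl" and hom_Inr: "hom H (hg_sum G H) Inr Inr"
  unfolding hom_def hg_sum_def by auto

theorem mainTheorem8:
  fixes sig :: "('l \<times> nat \<times> nat) set"
    and \<R> :: "('k, 'v, 'e, 'l) rule set"
    and \<rho>i \<rho>j :: "('k, 'v, 'e, 'l) rule"
    and M :: "('e \<times> 'e) set"
    and S :: "('a, 'b, 'l) hg" and epsv :: "'v + 'v \<Rightarrow> 'a" and epse :: "'e + 'e \<Rightarrow> 'b"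
    and N :: "('a \<times> 'a) set"
    and S' :: "('c, 'd, 'l) hg" and eps'v :: "'a \<Rightarrow> 'c" and eps'e :: "'b \<Rightarrow> 'd"
  assumes sys: "left_connected_system sig \<R>"
    and rules: "\<rho>i \<in> \<R>" "\<rho>j \<in> \<R>"
    and M: "edge_gluing_pairs (rL \<rho>i) (rL \<rho>j) M"
    and S: "hyp sig S"
    and eps: "coeq_hg (gamma (rL \<rho>i) (rL \<rho>j) M) (hg_sum (rL \<rho>i) (rL \<rho>j))
                (Inl \<circ> fst) (Inl \<circ> fst) (Inr \<circ> snd) (Inr \<circ> snd) S epsv epse"
    and N: "node_gluing_pairs (rL \<rho>i) (rL \<rho>j) S epsv N"
    and S': "hyp sig S'"
    and eps': "coeq_hg (discrete N :: ('a \<times> 'a, 'b, 'l) hg) S fst (\<lambda>_. undefined) snd (\<lambda>_. undefined)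
                S' eps'v eps'e"
    and cp': "yields_cp sig \<rho>i \<rho>j S'
                (eps'v \<circ> epsv \<circ> Inl) (eps'e \<circ> epse \<circ> Inl) (eps'v \<circ> epsv \<circ> Inr) (eps'e \<circ> epse \<circ> Inr)"
  shows "yields_cp sig \<rho>i \<rho>j S (epsv \<circ> Inl) (epse \<circ> Inl) (epsv \<circ> Inr) (epse \<circ> Inr)"
proof -
  let ?L1 = "rL \<rho>i" and ?L2 = "rL \<rho>j"
  have cpu: "mono_hom ?L1 S' (eps'v \<circ> epsv \<circ> Inl) (eps'e \<circ> epse \<circ> Inl) \<and>
     mono_hom ?L2 S' (eps'v \<circ> epsv \<circ> Inr) (eps'e \<circ> epse \<circ> Inr) \<and> hyp sig S' \<and> ma S' \<and>
     (\<exists>C1 g1v g1e C2 g2v g2e.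
        deriv sig \<rho>i S' (eps'v \<circ> epsv \<circ> Inl) (eps'e \<circ> epse \<circ> Inl) C1 g1v g1e \<and>
        deriv sig \<rho>j S' (eps'v \<circ> epsv \<circ> Inr) (eps'e \<circ> epse \<circ> Inr) C2 g2v g2e \<and>
        hV S' = (eps'v \<circ> epsv \<circ> Inl) ` hV ?L1 \<union> (eps'v \<circ> epsv \<circ> Inr) ` hV ?L2 \<and>
        hE S' = (eps'e \<circ> epse \<circ> Inl) ` hE ?L1 \<union> (eps'e \<circ> epse \<circ> Inr) ` hE ?L2 \<and>
        \<not> (factors_through ?L1 C2 (eps'v \<circ> epsv \<circ> Inl) (eps'e \<circ> epse \<circ> Inl) g2v g2e \<and>
            factors_through ?L2 C1 (eps'v \<circ> epsv \<circ> Inr) (eps'e \<circ> epse \<circ> Inr) g1v g1e))"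
    using cp' unfolding yields_cp_def .
  have cp'u: "mono_hom ?L1 S' (eps'v \<circ> epsv \<circ> Inl) (eps'e \<circ> epse \<circ> Inl)"
     "mono_hom ?L2 S' (eps'v \<circ> epsv \<circ> Inr) (eps'e \<circ> epse \<circ> Inr)" "ma S'"
      apply (rule conjunct1[OF cpu])
     apply (rule conjunct1[OF conjunct2[OF cpu]])
    apply (rule conjunct1[OF conjunct2[OF conjunct2[OF conjunct2[OF cpu]]]])
    done
  obtain C1' g1v g1e C2' g2v g2e where
    d1': "deriv sig \<rho>i S' (eps'v \<circ> epsv \<circ> Inl) (eps'e \<circ> epse \<circ> Inl) C1' g1v g1e" and
    d2': "deriv sig \<rho>j S' (eps'v \<circ> epsv \<circ> Inr) (eps'e \<circ> epse \<circ> Inr) C2' g2v g2e" and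
    np': "\<not> (factors_through ?L1 C2' (eps'v \<circ> epsv \<circ> Inl) (eps'e \<circ> epse \<circ> Inl) g2v g2e \<and>
            factors_through ?L2 C1' (eps'v \<circ> epsv \<circ> Inr) (eps'e \<circ> epse \<circ> Inr) g1v g1e)"
    using cpu
    apply (elim conjE exE)
    apply (rule that)
    apply assumption+
    done
  have dN: "hV (discrete N :: ('a \<times> 'a, 'b, 'l) hg) = N" "hE (discrete N :: ('a \<times> 'a, 'b, 'l) hg) = {}"
    by (simp_all add: discrete_def)
  have qhom: "hom S S' eps'v eps'e" using eps' unfolding coeq_hg_def by blast
  have cv: "set_coeq N (hV S) fst snd (hV S') eps'v" using eps' unfolding coeq_hg_def dN by blast
  have ce: "set_coeq ({}::'b set) (hE S) (\<lambda>_. undefined) (\<lambda>_. undefined) (hE S') eps'e"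
    using eps' unfolding coeq_hg_def dN by blast
  have qe_inj: "inj_on eps'e (hE S)"
  proof (rule inj_onI)
    fix x y assume "x \<in> hE S" "y \<in> hE S" "eps'e x = eps'e y"
    then show "x = y" using ce unfolding set_coeq_def Let_def by auto
  qed
  have finS': "finite (hE S')" using S' unfolding hyp_def by blast
  have maS: "ma S" by (rule ma_from_hom[OF qhom qe_inj finS' cp'u(3)])
  have Nio: "fst a \<in> inn S \<and> snd a \<in> outn S" if "a \<in> N" for a
    using N that unfolding node_gluing_pairs_def Let_def by auto
  have q_glue: "x \<in> inn S \<union> outn S"
    if xy: "x \<in> hV S" "y \<in> hV S" "eps'v x = eps'v y" "x \<noteq> y" for x y
  proof -
    let ?R = "{(fst a, snd a) | a. a \<in> N}"
    have "(x, y) \<in> (?R \<union> ?R\<inverse>)\<^sup>*" using cv xy unfolding set_coeq_def Let_def by blast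
    then obtain z where "(x, z) \<in> ?R \<union> ?R\<inverse>" using xy(4) by (cases rule: converse_rtranclE) auto
    then obtain a where a: "a \<in> N" "x = fst a \<or> x = snd a" by auto
    then show ?thesis using Nio[OF a(1)] by blast
  qed
  have ehom: "hom (hg_sum ?L1 ?L2) S epsv epse" using eps unfolding coeq_hg_def by blast
  have evs: "epsv ` hV (hg_sum ?L1 ?L2) = hV S" and ees: "epse ` hE (hg_sum ?L1 ?L2) = hE S"
    using eps unfolding coeq_hg_def set_coeq_def by blast+
  have r1: "left_connected_rule sig \<rho>i" and r2: "left_connected_rule sig \<rho>j"
    using sys rules unfolding left_connected_system_def by blast+
  have m1: "mono_hom ?L1 S (epsv \<circ> Inl) (epse \<circ> Inl)"
    unfolding mono_hom_def
  proof (intro conjI)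
    show "hom ?L1 S (epsv \<circ> Inl) (epse \<circ> Inl)" by (rule hom_comp[OF hom_Inl ehom])
    have "inj_on (eps'v \<circ> (epsv \<circ> Inl)) (hV ?L1)" "inj_on (eps'e \<circ> (epse \<circ> Inl)) (hE ?L1)"
      using cp'u(1) unfolding mono_hom_def comp_assoc by blast+
    then show "inj_on (epsv \<circ> Inl) (hV ?L1)" "inj_on (epse \<circ> Inl) (hE ?L1)"
      using inj_on_imageI2 by blast+
  qed
  have m2: "mono_hom ?L2 S (epsv \<circ> Inr) (epse \<circ> Inr)"
    unfolding mono_hom_def
  proof (intro conjI)
    show "hom ?L2 S (epsv \<circ> Inr) (epse \<circ> Inr)" by (rule hom_comp[OF hom_Inr ehom])
    have "inj_on (eps'v \<circ> (epsv \<circ> Inr)) (hV ?L2)" "inj_on (eps'e \<circ> (epse \<circ> Inr)) (hE ?L2)"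
      using cp'u(2) unfolding mono_hom_def comp_assoc by blast+
    then show "inj_on (epsv \<circ> Inr) (hV ?L2)" "inj_on (epse \<circ> Inr) (hE ?L2)"
      using inj_on_imageI2 by blast+
  qed
  have loc1: "dtrans sig \<rho>i S (epsv \<circ> Inl) (epse \<circ> Inl) S' eps'v eps'e C1' g1v g1e"
  proof (rule dtrans.intro)
    show "deriv sig \<rho>i S' (eps'v \<circ> (epsv \<circ> Inl)) (eps'e \<circ> (epse \<circ> Inl)) C1' g1v g1e"
      using d1' unfolding comp_assoc .
  qed (use r1 S maS S' qhom qe_inj q_glue m1 in auto)
  have loc2: "dtrans sig \<rho>j S (epsv \<circ> Inr) (epse \<circ> Inr) S' eps'v eps'e C2' g2v g2e"
  proof (rule dtrans.intro)
    show "deriv sig \<rho>j S' (eps'v \<circ> (epsv \<circ> Inr)) (eps'e \<circ> (epse \<circ> Inr)) C2' g2v g2e"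
      using d2' unfolding comp_assoc .
  qed (use r2 S maS S' qhom qe_inj q_glue m2 in auto)
  obtain C1 :: "('a, 'b, 'l) hg" and p1v p1e where
    c1: "deriv sig \<rho>i S (epsv \<circ> Inl) (epse \<circ> Inl) C1 id id" "hom C1 C1' p1v p1e"
      "\<forall>x\<in>hV C1. g1v (p1v x) = eps'v x" "\<forall>e\<in>hE C1. g1e (p1e e) = eps'e e"
    using dtrans.transfer[OF loc1] by blast
  obtain C2 :: "('a, 'b, 'l) hg" and p2v p2e where
    c2: "deriv sig \<rho>j S (epsv \<circ> Inr) (epse \<circ> Inr) C2 id id" "hom C2 C2' p2v p2e"
      "\<forall>x\<in>hV C2. g2v (p2v x) = eps'v x" "\<forall>e\<in>hE C2. g2e (p2e e) = eps'e e"
    using dtrans.transfer[OF loc2] by blast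
  have epiV: "hV S = (epsv \<circ> Inl) ` hV ?L1 \<union> (epsv \<circ> Inr) ` hV ?L2"
    using evs unfolding hg_sum_def Plus_def by (simp add: image_Un image_comp)
  have epiE: "hE S = (epse \<circ> Inl) ` hE ?L1 \<union> (epse \<circ> Inr) ` hE ?L2"
    using ees unfolding hg_sum_def Plus_def by (simp add: image_Un image_comp)
  have np: "\<not> (factors_through ?L1 C2 (epsv \<circ> Inl) (epse \<circ> Inl) id id \<and>
            factors_through ?L2 C1 (epsv \<circ> Inr) (epse \<circ> Inr) id id)"
  proof
    assume f: "factors_through ?L1 C2 (epsv \<circ> Inl) (epse \<circ> Inl) id id \<and>
            factors_through ?L2 C1 (epsv \<circ> Inr) (epse \<circ> Inr) id id"
    have "factors_through ?L1 C2' (eps'v \<circ> (epsv \<circ> Inl)) (eps'e \<circ> (epse \<circ> Inl)) g2v g2e"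
      using fac_transfer[OF conjunct1[OF f] c2(2-4)] .
    moreover have "factors_through ?L2 C1' (eps'v \<circ> (epsv \<circ> Inr)) (eps'e \<circ> (epse \<circ> Inr)) g1v g1e"
      using fac_transfer[OF conjunct2[OF f] c1(2-4)] .
    ultimately show False using np' unfolding comp_assoc by blast
  qed
  show ?thesis unfolding yields_cp_def
    apply (intro conjI m1 m2 S maS)
    apply (rule exI[of _ C1], rule exI[of _ id], rule exI[of _ id])
    apply (rule exI[of _ C2], rule exI[of _ id], rule exI[of _ id])
    apply (intro conjI c1(1) c2(1) epiV epiE np)
    done
qed


end
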